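(* Under the standing assumptions below, let $E\subset X$ be measurable, $u:E\to[-\infty,\infty]$, $g:E\to[0,\infty]$ measurable, and $\hat g(x)=g(x)(1+d(x,a))^2$ for $x\in E$. Then $g$ is a $p$-weak upper gradient of $u$ in $E$ with respect to $(d,\mu)$ if and only if $\hat g$ is a $p$-weak upper gradient of $u$ in $E$ with respect to $(\hat d,\hat\mu_q)$.
   Context: Standing assumptions: $1\le p<\infty$; $(X,d)$ is a complete unbounded metric space with a positive complete Borel measure $\mu$ with $0<\mu(B)<\infty$ for every ball; $\mu$ is doubling and supports a $p$-Poincaré inequality; for a base point $a$ with $|x|=d(x,a)$ there are $s,C_s>0$ with $\mu(B(a,r))/\mu(B(a,R))\ge C_s(r/R)^s$ for $1\le r\le R<\infty$; $X$ is annularly connected for large radii around $a$; and $q>s$. Sphericalization: $\widehat X=X\cup\{\infty\}$, $d_a(x,y)=\frac{d(x,y)}{(1+|x|)(1+|y|)}$ for $x,y\in X$, $d_a(x,\infty)=d_a(\infty,x)=\frac1{1+|x|}$, $d_a(\infty,\infty)=0$, $\hat d(x,y)=\inf\sum_{j=1}^kd_a(x_{j-1},x_j)$ over finite chains in $\widehat X$; $d\hat\mu_q=d\mu/(1+|x|)^q$ on $X$, $\hat\mu_q(\{\infty\})=0$. A measurable $g\ge0$ is a $p$-weak upper gradient of $u$ in $E$ (w.r.t. a metric and measure) if $|u(\gamma(0))-u(\gamma(1))|\le\int_\gamma g\,ds$ for all nonconstant rectifiable curves $\gamma:[0,1]\to E$ outside a family of zero $p$-modulus; a curve family has zero $p$-modulus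 if some nonnegative Borel $\rho\in L^p$ has $\int_\gamma\rho\,ds=\infty$ on each of its curves. *)

theory Defs
  imports "HOL-Analysis.Analysis"
begin

definition metric_on :: "('a \<Rightarrow> 'a \<Rightarrow> real) \<Rightarrow> bool" where
  "metric_on d \<longleftrightarrow>
     (\<forall>x y. 0 \<le> d x y) \<and> (\<forall>x y. d x y = 0 \<longleftrightarrow> x = y) \<and>
     (\<forall>x y. d x y = d y x) \<and> (\<forall>x y z. d x z \<le> d x y + d y z)"

definition metric_complete :: "('a \<Rightarrow> 'a \<Rightarrow> real) \<Rightarrow> bool" where
  "metric_complete d \<longleftrightarrow>
     (\<forall>f :: nat \<Rightarrow> 'a.
        (\<forall>e>0. \<exists>N. \<forall>m\<ge>N. \<forall>n\<ge>N. d (f m) (f n) < e) \<longrightarrow>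
        (\<exists>x. (\<lambda>n. d (f n) x) \<longlonglongrightarrow> 0))"

definition dball :: "('a \<Rightarrow> 'a \<Rightarrow> real) \<Rightarrow> 'a \<Rightarrow> real \<Rightarrow> 'a set" where
  "dball d x r = {y. d x y < r}"

definition d_open :: "('a \<Rightarrow> 'a \<Rightarrow> real) \<Rightarrow> 'a set \<Rightarrow> bool" where
  "d_open d U \<longleftrightarrow> (\<forall>x\<in>U. \<exists>r>0. dball d x r \<subseteq> U)"

definition d_borel :: "('a \<Rightarrow> 'a \<Rightarrow> real) \<Rightarrow> 'a measure" where
  "d_borel d = sigma UNIV {U. d_open d U}"

definition epowr :: "ennreal \<Rightarrow> real \<Rightarrow> ennreal" where
  "epowr x p = (if x = \<infinity> then \<infinity> else ennreal (enn2real x powr p))"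

definition d_curve :: "('a \<Rightarrow> 'a \<Rightarrow> real) \<Rightarrow> (real \<Rightarrow> 'a) \<Rightarrow> bool" where
  "d_curve d \<gamma> \<longleftrightarrow>
     (\<forall>t\<in>{0..1}. \<forall>e>0. \<exists>\<delta>>0. \<forall>s\<in>{0..1}. \<bar>s - t\<bar> < \<delta> \<longrightarrow> d (\<gamma> s) (\<gamma> t) < e)"

definition curve_length :: "('a \<Rightarrow> 'a \<Rightarrow> real) \<Rightarrow> (real \<Rightarrow> 'a) \<Rightarrow> real \<Rightarrow> real \<Rightarrow> ennreal" where
  "curve_length d \<gamma> a b =
     (SUP nt \<in> {(n, t :: nat \<Rightarrow> real). t 0 = a \<and> t n = b \<and> (\<forall>i<n. t i \<le> t (Suc i))}.
        (\<Sum>i<fst nt. ennreal (d (\<gamma> (snd nt i)) (\<gamma> (snd nt (Suc i))))))"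

definition d_rectifiable :: "('a \<Rightarrow> 'a \<Rightarrow> real) \<Rightarrow> (real \<Rightarrow> 'a) \<Rightarrow> bool" where
  "d_rectifiable d \<gamma> \<longleftrightarrow> d_curve d \<gamma> \<and> curve_length d \<gamma> 0 1 < \<infinity>"

definition nonconstant_curve :: "(real \<Rightarrow> 'a) \<Rightarrow> bool" where
  "nonconstant_curve \<gamma> \<longleftrightarrow> (\<exists>s\<in>{0..1}. \<exists>t\<in>{0..1}. \<gamma> s \<noteq> \<gamma> t)"

definition arclen :: "('a \<Rightarrow> 'a \<Rightarrow> real) \<Rightarrow> (real \<Rightarrow> 'a) \<Rightarrow> real \<Rightarrow> real" where
  "arclen d \<gamma> t = enn2real (curve_length d \<gamma> 0 (max 0 (min 1 t)))"

text \<open>Line integral of a nonnegative g along a rectifiable curve gamma with respect to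
  arc length, i.e. the Lebesgue--Stieltjes integral of g o gamma with respect to ds_gamma.\<close>
definition line_int :: "('a \<Rightarrow> 'a \<Rightarrow> real) \<Rightarrow> ('a \<Rightarrow> ennreal) \<Rightarrow> (real \<Rightarrow> 'a) \<Rightarrow> ennreal" where
  "line_int d g \<gamma> = (\<integral>\<^sup>+ t. g (\<gamma> t) * indicator {0..1} t \<partial>interval_measure (arclen d \<gamma>))"

definition zero_p_modulus ::
    "('a \<Rightarrow> 'a \<Rightarrow> real) \<Rightarrow> 'a measure \<Rightarrow> real \<Rightarrow> (real \<Rightarrow> 'a) set \<Rightarrow> bool" where
  "zero_p_modulus d M p \<Gamma> \<longleftrightarrow>
     (\<exists>\<rho> :: 'a \<Rightarrow> ennreal. \<rho> \<in> borel_measurable (d_borel d) \<and>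
        (\<integral>\<^sup>+ x. epowr (\<rho> x) p \<partial>M) < \<infinity> \<and> (\<forall>\<gamma>\<in>\<Gamma>. line_int d \<rho> \<gamma> = \<infinity>))"

definition ug_ineq :: "ereal \<Rightarrow> ereal \<Rightarrow> ennreal \<Rightarrow> bool" where
  "ug_ineq ux uy I \<longleftrightarrow>
     (if \<bar>ux\<bar> = \<infinity> \<or> \<bar>uy\<bar> = \<infinity> then I = \<infinity>
      else ennreal \<bar>real_of_ereal ux - real_of_ereal uy\<bar> \<le> I)"

definition p_weak_upper_gradient ::
    "('a \<Rightarrow> 'a \<Rightarrow> real) \<Rightarrow> 'a measure \<Rightarrow> real \<Rightarrow> ('a \<Rightarrow> ereal) \<Rightarrow> ('a \<Rightarrow> ennreal) \<Rightarrow> 'a set \<Rightarrow> bool"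
  where
  "p_weak_upper_gradient d M p u g E \<longleftrightarrow>
     g \<in> borel_measurable (restrict_space M E) \<and>
     (\<exists>\<Gamma>. zero_p_modulus d M p \<Gamma> \<and>
        (\<forall>\<gamma>. d_rectifiable d \<gamma> \<and> nonconstant_curve \<gamma> \<and> \<gamma> ` {0..1} \<subseteq> E \<and> \<gamma> \<notin> \<Gamma> \<longrightarrow>
               ug_ineq (u (\<gamma> 0)) (u (\<gamma> 1)) (line_int d g \<gamma>)))"

definition upper_gradient ::
    "('a \<Rightarrow> 'a \<Rightarrow> real) \<Rightarrow> ('a \<Rightarrow> real) \<Rightarrow> ('a \<Rightarrow> ennreal) \<Rightarrow> bool" where
  "upper_gradient d u g \<longleftrightarrow>
     g \<in> borel_measurable (d_borel d) \<and>
     (\<forall>\<gamma>. d_rectifiable d \<gamma> \<and> nonconstant_curve \<gamma> \<longrightarrow>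
            ennreal \<bar>u (\<gamma> 0) - u (\<gamma> 1)\<bar> \<le> line_int d g \<gamma>)"

definition unbounded_metric :: "('a \<Rightarrow> 'a \<Rightarrow> real) \<Rightarrow> bool" where
  "unbounded_metric d \<longleftrightarrow> (\<forall>x R. \<exists>y. d x y > R)"

definition good_borel_measure :: "('a \<Rightarrow> 'a \<Rightarrow> real) \<Rightarrow> 'a measure \<Rightarrow> bool" where
  "good_borel_measure d \<mu> \<longleftrightarrow>
     space \<mu> = UNIV \<and> sets (d_borel d) \<subseteq> sets \<mu> \<and> complete_measure \<mu> \<and>
     (\<forall>x r. r > 0 \<longrightarrow> 0 < emeasure \<mu> (dball d x r) \<and> emeasure \<mu> (dball d x r) < \<infinity>)"

definition doubling :: "('a \<Rightarrow> 'a \<Rightarrow> real) \<Rightarrow> 'a measure \<Rightarrow> bool" where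
  "doubling d \<mu> \<longleftrightarrow>
     (\<exists>C. \<forall>x r. r > 0 \<longrightarrow> emeasure \<mu> (dball d x (2 * r)) \<le> ennreal C * emeasure \<mu> (dball d x r))"

definition poincare :: "('a \<Rightarrow> 'a \<Rightarrow> real) \<Rightarrow> 'a measure \<Rightarrow> real \<Rightarrow> bool" where
  "poincare d \<mu> p \<longleftrightarrow>
     (\<exists>C>0. \<exists>lam\<ge>1. \<forall>(u :: 'a \<Rightarrow> real) (g :: 'a \<Rightarrow> ennreal).
        (\<forall>x r. r > 0 \<longrightarrow> set_integrable \<mu> (dball d x r) u) \<and> upper_gradient d u g \<longrightarrow>
        (\<forall>x r. r > 0 \<longrightarrow>
           (let B = dball d x r;
                uB = (\<integral>y\<in>B. u y \<partial>\<mu>) / measure \<mu> B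
            in ennreal ((\<integral>y\<in>B. \<bar>u y - uB\<bar> \<partial>\<mu>) / measure \<mu> B)
               \<le> ennreal (C * r) *
                 epowr ((\<integral>\<^sup>+ y\<in>dball d x (lam * r). epowr (g y) p \<partial>\<mu>)
                         / emeasure \<mu> (dball d x (lam * r))) (1 / p))))"

definition lower_mass_bound ::
    "('a \<Rightarrow> 'a \<Rightarrow> real) \<Rightarrow> 'a measure \<Rightarrow> 'a \<Rightarrow> real \<Rightarrow> real \<Rightarrow> bool" where
  "lower_mass_bound d \<mu> a s Cs \<longleftrightarrow>
     (\<forall>r R. 1 \<le> r \<and> r \<le> R \<longrightarrow>
        measure \<mu> (dball d a r) / measure \<mu> (dball d a R) \<ge> Cs * (r / R) powr s)"

definition annularly_connected_large ::
    "('a \<Rightarrow> 'a \<Rightarrow> real) \<Rightarrow> 'a \<Rightarrow> bool" where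
  "annularly_connected_large d a \<longleftrightarrow>
     (\<exists>\<Lambda>\<ge>1. \<exists>R0>0. \<forall>r\<ge>R0. \<forall>x y.
        x \<in> dball d a (2 * r) - dball d a r \<and> y \<in> dball d a (2 * r) - dball d a r \<longrightarrow>
        (\<exists>\<gamma>. d_curve d \<gamma> \<and> \<gamma> 0 = x \<and> \<gamma> 1 = y \<and>
             \<gamma> ` {0..1} \<subseteq> dball d a (\<Lambda> * r) - dball d a (r / \<Lambda>)))"

section \<open>Sphericalization; None plays the role of the point \<infinity>\<close>

fun d_a :: "('a \<Rightarrow> 'a \<Rightarrow> real) \<Rightarrow> 'a \<Rightarrow> 'a option \<Rightarrow> 'a option \<Rightarrow> real" where
  "d_a d a (Some x) (Some y) = d x y / ((1 + d x a) * (1 + d y a))"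
| "d_a d a (Some x) None = 1 / (1 + d x a)"
| "d_a d a None (Some y) = 1 / (1 + d y a)"
| "d_a d a None None = 0"

definition hat_d :: "('a \<Rightarrow> 'a \<Rightarrow> real) \<Rightarrow> 'a \<Rightarrow> 'a option \<Rightarrow> 'a option \<Rightarrow> real" where
  "hat_d d a x y =
     (INF xs \<in> {xs. xs \<noteq> [] \<and> hd xs = x \<and> last xs = y}.
        (\<Sum>j<length xs - 1. d_a d a (xs ! j) (xs ! Suc j)))"

definition hat_mu :: "('a \<Rightarrow> 'a \<Rightarrow> real) \<Rightarrow> 'a measure \<Rightarrow> 'a \<Rightarrow> real \<Rightarrow> 'a option measure" where
  "hat_mu d \<mu> a q =
     measure_of UNIV {A. Some -` A \<in> sets \<mu>}
       (\<lambda>A. \<integral>\<^sup>+ x\<in>Some -` A. ennreal (1 / (1 + d x a) powr q) \<partial>\<mu>)"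

end

theory Submission
  imports Defs
begin


definition parts :: "real \<Rightarrow> real \<Rightarrow> (nat \<times> (nat \<Rightarrow> real)) set" where
  "parts a b = {(n, t :: nat \<Rightarrow> real). t 0 = a \<and> t n = b \<and> (\<forall>i<n. t i \<le> t (Suc i))}"

definition psum :: "('a \<Rightarrow> 'a \<Rightarrow> real) \<Rightarrow> (real \<Rightarrow> 'a) \<Rightarrow> (nat \<times> (nat \<Rightarrow> real)) \<Rightarrow> ennreal" where
  "psum dd \<gamma> nt = (\<Sum>i<fst nt. ennreal (dd (\<gamma> (snd nt i)) (\<gamma> (snd nt (Suc i)))))"

lemma curve_length_alt: "curve_length dd \<gamma> a b = (SUP p\<in>parts a b. psum dd \<gamma> p)"
  unfolding curve_length_def parts_def psum_def by simp

lemma sum_split_ennreal: "(\<Sum>i<m+(n::nat). f i) = (\<Sum>i<m. f i) + (\<Sum>i<n. (f (m+i)::ennreal))"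
  by (induction n) (auto simp: add.assoc)

lemma partsI: "t 0 = a \<Longrightarrow> t n = b \<Longrightarrow> (\<And>i. i<n \<Longrightarrow> t i \<le> t (Suc i)) \<Longrightarrow> (n,t) \<in> parts a b"
  unfolding parts_def by auto

lemma parts_mono:
  assumes "(n,t) \<in> parts a b" "i \<le> j" "j \<le> n"
  shows "t i \<le> t j"
  using assms(2,3)
proof (induction j)
  case 0 then show ?case by simp
next
  case (Suc j)
  have st: "t j \<le> t (Suc j)" using assms(1) Suc.prems unfolding parts_def by auto
  show ?case
  proof (cases "i = Suc j")
    case False
    then have "i \<le> j" using Suc.prems by simp
    then show ?thesis using Suc.IH Suc.prems st by simp
  qed simp
qed

lemma parts_range:
  assumes "(n,t) \<in> parts a b" "i \<le> n"
  shows "a \<le> t i" "t i \<le> b"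
  using parts_mono[OF assms(1), of 0 i] parts_mono[OF assms(1), of i n] assms
  unfolding parts_def by auto

lemma parts_single: "a \<le> b \<Longrightarrow> (1, \<lambda>i. if i = 0 then a else b) \<in> parts a b"
  unfolding parts_def by auto

lemma parts_nonempty: "a \<le> b \<Longrightarrow> parts a b \<noteq> {}"
  using parts_single by blast

lemma parts_le: "(n,t) \<in> parts a b \<Longrightarrow> a \<le> b"
  using parts_range[of n t a b 0] by auto

lemma curve_length_compare:
  assumes "\<And>s t. a \<le> s \<Longrightarrow> s \<le> t \<Longrightarrow> t \<le> b \<Longrightarrow>
             ennreal (d1 (\<gamma>1 s) (\<gamma>1 t)) \<le> c * ennreal (d2 (\<gamma>2 s) (\<gamma>2 t))"
  shows "curve_length d1 \<gamma>1 a b \<le> c * curve_length d2 \<gamma>2 a b"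
  unfolding curve_length_alt SUP_mult_left_ennreal
proof (rule SUP_mono)
  fix p assume p: "p \<in> parts a b"
  obtain n t where nt: "p = (n,t)" by (cases p)
  have "psum d1 \<gamma>1 p \<le> c * psum d2 \<gamma>2 p"
    unfolding psum_def nt sum_distrib_left fst_conv snd_conv
  proof (rule sum_mono)
    fix i assume "i \<in> {..<n}"
    then have "a \<le> t i" "t i \<le> t (Suc i)" "t (Suc i) \<le> b"
      using parts_range[of n t a b] parts_mono[of n t a b i "Suc i"] p nt by auto
    then show "ennreal (d1 (\<gamma>1 (t i)) (\<gamma>1 (t (Suc i)))) \<le> c * ennreal (d2 (\<gamma>2 (t i)) (\<gamma>2 (t (Suc i))))"
      using assms by blast
  qed
  then show "\<exists>m\<in>parts a b. psum d1 \<gamma>1 p \<le> c * psum d2 \<gamma>2 m" using p by blast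
qed

lemma curve_length_cong:
  assumes "\<And>t. a \<le> t \<Longrightarrow> t \<le> b \<Longrightarrow> \<gamma>1 t = \<gamma>2 t"
  shows "curve_length dd \<gamma>1 a b = curve_length dd \<gamma>2 a b"
proof (rule antisym)
  show "curve_length dd \<gamma>1 a b \<le> curve_length dd \<gamma>2 a b"
    using curve_length_compare[of a b dd \<gamma>1 1 dd \<gamma>2] assms by simp
  show "curve_length dd \<gamma>2 a b \<le> curve_length dd \<gamma>1 a b"
    using curve_length_compare[of a b dd \<gamma>2 1 dd \<gamma>1] assms by simp
qed

locale pmet =
  fixes dd :: "'a \<Rightarrow> 'a \<Rightarrow> real"
  assumes nonneg: "0 \<le> dd x y"
    and refl0: "dd x x = 0"
    and symm: "dd x y = dd y x"
    and tri: "dd x z \<le> dd x y + dd y z"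
begin

lemma dist_le_length:
  assumes "a \<le> b"
  shows "ennreal (dd (\<gamma> a) (\<gamma> b)) \<le> curve_length dd \<gamma> a b"
proof -
  have "psum dd \<gamma> (1, \<lambda>i. if i = 0 then a else b) = ennreal (dd (\<gamma> a) (\<gamma> b))"
    unfolding psum_def by simp
  then show ?thesis unfolding curve_length_alt
    by (metis SUP_upper assms parts_single)
qed

lemma length_refl: "curve_length dd \<gamma> a a = 0"
  unfolding curve_length_alt
proof -
  have "psum dd \<gamma> p = 0" if p: "p \<in> parts a a" for p
  proof -
    obtain n t where nt: "p = (n,t)" by (cases p)
    have "\<And>i. i \<le> n \<Longrightarrow> t i = a" using parts_range[of n t a a] p nt by force
    then show ?thesis unfolding psum_def nt by (simp add: refl0)
  qed
  then show "(SUP p\<in>parts a a. psum dd \<gamma> p) = 0" using parts_nonempty[of a a] by simp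
qed

lemma length_concat:
  assumes p1: "(n1,t1) \<in> parts a b" and p2: "(n2,t2) \<in> parts b c"
  shows "(n1+n2, \<lambda>i. if i \<le> n1 then t1 i else t2 (i - n1)) \<in> parts a c"
    and "psum dd \<gamma> (n1+n2, \<lambda>i. if i \<le> n1 then t1 i else t2 (i - n1)) =
         psum dd \<gamma> (n1,t1) + psum dd \<gamma> (n2,t2)"
proof -
  let ?t = "\<lambda>i. if i \<le> n1 then t1 i else t2 (i - n1)"
  have a: "t1 0 = a" "t1 n1 = b" "\<And>i. i < n1 \<Longrightarrow> t1 i \<le> t1 (Suc i)"
    using p1 unfolding parts_def by auto
  have b: "t2 0 = b" "t2 n2 = c" "\<And>i. i < n2 \<Longrightarrow> t2 i \<le> t2 (Suc i)"
    using p2 unfolding parts_def by auto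
  show "(n1+n2, ?t) \<in> parts a c"
  proof (rule partsI)
    show "?t 0 = a" using a by simp
    show "?t (n1+n2) = c" using a b by (cases "n2 = 0") auto
  next
    fix i assume i: "i < n1 + n2"
    show "?t i \<le> ?t (Suc i)"
    proof (cases "i < n1")
      case True then show ?thesis using a by auto
    next
      case False
      show ?thesis
      proof (cases "i = n1")
        case True then show ?thesis using a b(1) b(3)[of 0] i by auto
      next
        case False
        then have "i > n1" using \<open>\<not> i < n1\<close> by simp
        then have e: "Suc i - n1 = Suc (i - n1)" "\<not> i \<le> n1" "\<not> Suc i \<le> n1" "i - n1 < n2" using i by auto
        show ?thesis unfolding if_not_P[OF e(2)] if_not_P[OF e(3)] e(1) by (rule b(3)[OF e(4)])
      qed
    qed
  qed
  show "psum dd \<gamma> (n1+n2, ?t) = psum dd \<gamma> (n1,t1) + psum dd \<gamma> (n2,t2)"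
    unfolding psum_def fst_conv snd_conv sum_split_ennreal
  proof (intro arg_cong2[where f="(+)"] sum.cong refl)
    fix i assume "i \<in> {..<n1}" then show
      "ennreal (dd (\<gamma> (?t i)) (\<gamma> (?t (Suc i)))) = ennreal (dd (\<gamma> (t1 i)) (\<gamma> (t1 (Suc i))))"
      by simp
  next
    fix i assume "i \<in> {..<n2}" then show
      "ennreal (dd (\<gamma> (?t (n1+i))) (\<gamma> (?t (Suc (n1+i))))) = ennreal (dd (\<gamma> (t2 i)) (\<gamma> (t2 (Suc i))))"
      using a(2) b(1) by (cases "i = 0") auto
  qed
qed

lemma length_split_part:
  assumes p: "(n,t) \<in> parts a c" and ab: "a \<le> b" and bc: "b \<le> c" and n: "0 < n"
  shows "\<exists>k<n. (\<forall>i\<le>k. t i \<le> b) \<and> b \<le> t (Suc k) \<and>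
     psum dd \<gamma> (n,t) \<le> psum dd \<gamma> (Suc k, \<lambda>i. if i \<le> k then t i else b)
        + psum dd \<gamma> (n - k, \<lambda>i. if i = 0 then b else t (k+i)) \<and>
     (Suc k, \<lambda>i. if i \<le> k then t i else b) \<in> parts a b \<and>
     (n - k, \<lambda>i. if i = 0 then b else t (k+i)) \<in> parts b c"
proof -
  have t: "t 0 = a" "t n = c" "\<And>i. i < n \<Longrightarrow> t i \<le> t (Suc i)"
    using p unfolding parts_def by auto
  have ex: "\<exists>i. i < n \<and> b \<le> t (Suc i)" using n t(2) bc by (intro exI[of _ "n - 1"]) auto
  define k where "k = (LEAST i. i < n \<and> b \<le> t (Suc i))"
  have k: "k < n" "b \<le> t (Suc k)" using LeastI_ex[OF ex] unfolding k_def by auto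
  have kmin: "\<And>i. i < k \<Longrightarrow> t (Suc i) < b"
  proof -
    fix i assume i: "i < k"
    have "\<not> (i < n \<and> b \<le> t (Suc i))" using not_less_Least[OF i[unfolded k_def]] .
    then show "t (Suc i) < b" using i k(1) by simp
  qed
  have tk: "t k \<le> b"
  proof (cases k)
    case 0 then show ?thesis using t(1) ab by simp
  next
    case (Suc j) then show ?thesis using kmin[of j] by simp
  qed
  have tle: "\<forall>i\<le>k. t i \<le> b"
  proof (intro allI impI)
    fix i assume "i \<le> k"
    then have "t i \<le> t k" using parts_mono[OF p, of i k] k(1) by simp
    then show "t i \<le> b" using tk by simp
  qed
  let ?t1 = "\<lambda>i. if i \<le> k then t i else b"
  let ?t2 = "\<lambda>i. if i = 0 then b else t (k+i)"
  have P1: "(Suc k, ?t1) \<in> parts a b"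
  proof (rule partsI)
    fix i assume "i < Suc k"
    then show "?t1 i \<le> ?t1 (Suc i)" using tk t(3)[of i] k(1) by (cases "i = k") auto
  qed (use t in auto)
  have P2: "(n - k, ?t2) \<in> parts b c"
  proof (rule partsI)
    show "?t2 (n - k) = c" using t(2) k(1) by simp
  next
    fix i assume "i < n - k"
    then show "?t2 i \<le> ?t2 (Suc i)" using k(2) t(3)[of "k+i"] by auto
  qed simp
  define f where "f i = ennreal (dd (\<gamma> (t i)) (\<gamma> (t (Suc i))))" for i
  have n_eq: "n = Suc k + (n - Suc k)" using k(1) by simp
  have "psum dd \<gamma> (n,t) = (\<Sum>i<n. f i)"
    unfolding psum_def f_def by simp
  also have "\<dots> = (\<Sum>i<Suc k + (n - Suc k). f i)"
    by (simp only: n_eq[symmetric])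
  also have "\<dots> = (\<Sum>i<k. f i) + f k + (\<Sum>i<n - Suc k. f (Suc k + i))"
    unfolding sum_split_ennreal by simp
  also have "\<dots> \<le> (\<Sum>i<k. f i) + (ennreal (dd (\<gamma> (t k)) (\<gamma> b)) + ennreal (dd (\<gamma> b) (\<gamma> (t (Suc k)))))
        + (\<Sum>i<n - Suc k. f (Suc k + i))"
    unfolding f_def
  proof (intro add_mono order_refl)
    show "ennreal (dd (\<gamma> (t k)) (\<gamma> (t (Suc k)))) \<le> ennreal (dd (\<gamma> (t k)) (\<gamma> b)) + ennreal (dd (\<gamma> b) (\<gamma> (t (Suc k))))"
      unfolding ennreal_plus[OF nonneg nonneg, symmetric] by (rule ennreal_leI) (rule tri)
  qed
  also have "\<dots> = psum dd \<gamma> (Suc k, ?t1) + psum dd \<gamma> (n - k, ?t2)"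
  proof -
    have 1: "psum dd \<gamma> (Suc k, ?t1) = (\<Sum>i<k. f i) + ennreal (dd (\<gamma> (t k)) (\<gamma> b))"
    proof -
      have "psum dd \<gamma> (Suc k, ?t1) = (\<Sum>i<k. ennreal (dd (\<gamma> (?t1 i)) (\<gamma> (?t1 (Suc i))))) + ennreal (dd (\<gamma> (t k)) (\<gamma> b))"
        unfolding psum_def fst_conv snd_conv sum.lessThan_Suc by simp
      also have "(\<Sum>i<k. ennreal (dd (\<gamma> (?t1 i)) (\<gamma> (?t1 (Suc i))))) = (\<Sum>i<k. f i)"
        unfolding f_def by (rule sum.cong) auto
      finally show ?thesis .
    qed
    have nk: "n - k = Suc (n - Suc k)" using k(1) by simp
    have 2: "psum dd \<gamma> (n - k, ?t2) = ennreal (dd (\<gamma> b) (\<gamma> (t (Suc k)))) + (\<Sum>i<n - Suc k. f (Suc k + i))"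
      unfolding psum_def f_def nk fst_conv snd_conv sum.lessThan_Suc_shift by simp
    show ?thesis unfolding 1 2 by (simp add: add.assoc)
  qed
  finally have "psum dd \<gamma> (n,t) \<le> psum dd \<gamma> (Suc k, ?t1) + psum dd \<gamma> (n - k, ?t2)" .
  then show ?thesis using k tle P1 P2 by (intro exI[of _ k] conjI)
qed

lemma length_add:
  assumes ab: "a \<le> b" and bc: "b \<le> c"
  shows "curve_length dd \<gamma> a c = curve_length dd \<gamma> a b + curve_length dd \<gamma> b c"
proof (rule antisym)
  show "curve_length dd \<gamma> a c \<le> curve_length dd \<gamma> a b + curve_length dd \<gamma> b c"
    unfolding curve_length_alt
  proof (rule SUP_least)
    fix p assume p: "p \<in> parts a c"
    obtain n t where nt: "p = (n,t)" by (cases p)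
    show "psum dd \<gamma> p \<le> (SUP p\<in>parts a b. psum dd \<gamma> p) + (SUP p\<in>parts b c. psum dd \<gamma> p)"
    proof (cases "n = 0")
      case True
      then show ?thesis unfolding nt psum_def by simp
    next
      case False
      then obtain k where k: "psum dd \<gamma> (n,t) \<le> psum dd \<gamma> (Suc k, \<lambda>i. if i \<le> k then t i else b)
        + psum dd \<gamma> (n - k, \<lambda>i. if i = 0 then b else t (k+i))"
        "(Suc k, \<lambda>i. if i \<le> k then t i else b) \<in> parts a b"
        "(n - k, \<lambda>i. if i = 0 then b else t (k+i)) \<in> parts b c"
        using length_split_part[OF p[unfolded nt] ab bc, of \<gamma>] False by auto
      show ?thesis unfolding nt
        by (rule order.trans[OF k(1)] add_mono SUP_upper k(2,3))+
    qed
  qed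
next
  have "(SUP p\<in>parts a b. psum dd \<gamma> p) + (SUP q\<in>parts b c. psum dd \<gamma> q)
      = (SUP p\<in>parts a b. SUP q\<in>parts b c. psum dd \<gamma> p + psum dd \<gamma> q)"
    using parts_nonempty[OF ab] parts_nonempty[OF bc]
    by (simp add: ennreal_SUP_add_left[symmetric] ennreal_SUP_add_right SUP_commute[of _ "parts b c"])
  also have "\<dots> \<le> (SUP p\<in>parts a c. psum dd \<gamma> p)"
  proof (intro SUP_least)
    fix p q assume p: "p \<in> parts a b" and q: "q \<in> parts b c"
    obtain n1 t1 where 1: "p = (n1,t1)" by (cases p)
    obtain n2 t2 where 2: "q = (n2,t2)" by (cases q)
    show "psum dd \<gamma> p + psum dd \<gamma> q \<le> (SUP p\<in>parts a c. psum dd \<gamma> p)"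
    proof -
      have m: "(n1+n2, \<lambda>i. if i \<le> n1 then t1 i else t2 (i - n1)) \<in> parts a c"
        using length_concat(1)[of n1 t1 a b n2 t2 c] p q 1 2 by simp
      have e: "psum dd \<gamma> p + psum dd \<gamma> q = psum dd \<gamma> (n1+n2, \<lambda>i. if i \<le> n1 then t1 i else t2 (i - n1))"
        using length_concat(2)[of n1 t1 a b n2 t2 c \<gamma>] p q 1 2 by simp
      show ?thesis unfolding e by (rule SUP_upper[OF m])
    qed
  qed
  finally show "curve_length dd \<gamma> a b + curve_length dd \<gamma> b c \<le> curve_length dd \<gamma> a c"
    unfolding curve_length_alt .
qed

lemma length_mono:
  assumes "a \<le> b" "b \<le> c"
  shows "curve_length dd \<gamma> a b \<le> curve_length dd \<gamma> a c"
  using length_add[OF assms, of \<gamma>] by simp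

lemma length_mono2:
  assumes "a \<le> b" "b \<le> c"
  shows "curve_length dd \<gamma> b c \<le> curve_length dd \<gamma> a c"
  using length_add[OF assms, of \<gamma>] by simp

end


definition clmp :: "real \<Rightarrow> real" where "clmp t = max 0 (min 1 t)"

lemma clmp_range: "0 \<le> clmp t" "clmp t \<le> 1" unfolding clmp_def by auto
lemma clmp_mono: "s \<le> t \<Longrightarrow> clmp s \<le> clmp t" unfolding clmp_def by auto
lemma clmp_id: "0 \<le> t \<Longrightarrow> t \<le> 1 \<Longrightarrow> clmp t = t" unfolding clmp_def by auto

lemma arclen_clmp: "arclen dd \<gamma> t = enn2real (curve_length dd \<gamma> 0 (clmp t))"
  unfolding arclen_def clmp_def ..

context pmet
begin

lemma unif_cont:
  assumes cur: "d_curve dd \<gamma>" and e: "e > 0"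
  shows "\<exists>\<eta>>0. \<forall>s\<in>{0..1}. \<forall>t\<in>{0..1}. \<bar>s - t\<bar> < \<eta> \<longrightarrow> dd (\<gamma> s) (\<gamma> t) < e"
proof (rule ccontr)
  assume "\<not> ?thesis"
  then have "\<forall>n::nat. \<exists>s t. s\<in>{0..1} \<and> t\<in>{0..1} \<and> \<bar>s - t\<bar> < 1 / real (Suc n) \<and> e \<le> dd (\<gamma> s) (\<gamma> t)"
    by (metis not_less of_nat_0_less_iff zero_less_Suc zero_less_divide_1_iff)
  then obtain S T where ST: "\<And>n. S n \<in> {0..1}" "\<And>n. T n \<in> {0..1}"
    "\<And>n. \<bar>S n - T n\<bar> < 1 / real (Suc n)" "\<And>n. e \<le> dd (\<gamma> (S n)) (\<gamma> (T n))"
    by metis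
  have "seq_compact {0..1::real}" by (rule compact_imp_seq_compact) simp
  then obtain l r where l: "l \<in> {0..1}" "strict_mono r" "(S \<circ> r) \<longlonglongrightarrow> l"
    using ST(1) unfolding seq_compact_def by metis
  have diff: "(\<lambda>n. T (r n) - S (r n)) \<longlonglongrightarrow> 0"
  proof (rule LIMSEQ_norm_0)
    fix n
    have "n \<le> r n" using seq_suble[OF l(2)] by simp
    then have "1 / real (Suc (r n)) \<le> 1 / real (Suc n)"
      by (intro divide_left_mono) auto
    then show "norm (T (r n) - S (r n)) < 1 / real (Suc n)"
      using ST(3)[of "r n"] by (simp add: abs_minus_commute)
  qed
  have "(\<lambda>n. S (r n) + (T (r n) - S (r n))) \<longlonglongrightarrow> l + 0"
    using l(3) diff by (intro tendsto_add) (auto simp: o_def)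
  then have Tl: "(T \<circ> r) \<longlonglongrightarrow> l" by (simp add: o_def)
  have "\<forall>e>0. \<exists>\<delta>>0. \<forall>s\<in>{0..1}. \<bar>s - l\<bar> < \<delta> \<longrightarrow> dd (\<gamma> s) (\<gamma> l) < e"
    using cur l(1) unfolding d_curve_def by blast
  then have "\<exists>\<delta>>0. \<forall>s\<in>{0..1}. \<bar>s - l\<bar> < \<delta> \<longrightarrow> dd (\<gamma> s) (\<gamma> l) < e/2"
    using e by (meson half_gt_zero)
  then obtain \<eta> where \<eta>: "\<eta> > 0" "\<And>s. s\<in>{0..1} \<Longrightarrow> \<bar>s - l\<bar> < \<eta> \<Longrightarrow> dd (\<gamma> s) (\<gamma> l) < e/2"
    by blast
  have "eventually (\<lambda>n. dist ((S \<circ> r) n) l < \<eta>) sequentially"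
    using l(3) \<eta>(1) by (rule tendstoD)
  moreover have "eventually (\<lambda>n. dist ((T \<circ> r) n) l < \<eta>) sequentially"
    using Tl \<eta>(1) by (rule tendstoD)
  ultimately have "eventually (\<lambda>n. dist ((S \<circ> r) n) l < \<eta> \<and> dist ((T \<circ> r) n) l < \<eta>) sequentially"
    by (rule eventually_conj)
  then obtain N where "\<And>n. n \<ge> N \<Longrightarrow> dist ((S \<circ> r) n) l < \<eta> \<and> dist ((T \<circ> r) n) l < \<eta>"
    unfolding eventually_sequentially by blast
  then have n: "dist (S (r N)) l < \<eta>" "dist (T (r N)) l < \<eta>" by auto
  have "dd (\<gamma> (S (r N))) (\<gamma> (T (r N))) \<le> dd (\<gamma> (S (r N))) (\<gamma> l) + dd (\<gamma> l) (\<gamma> (T (r N)))"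
    by (rule tri)
  also have "\<dots> = dd (\<gamma> (S (r N))) (\<gamma> l) + dd (\<gamma> (T (r N))) (\<gamma> l)" by (simp add: symm)
  also have "\<dots> < e/2 + e/2"
    using \<eta>(2)[OF ST(1) n(1)[unfolded dist_real_def]] \<eta>(2)[OF ST(2) n(2)[unfolded dist_real_def]]
    by simp
  finally show False using ST(4)[of "r N"] by simp
qed

lemma length_finite:
  assumes fin: "curve_length dd \<gamma> 0 1 < \<infinity>" and "0 \<le> a" "a \<le> b" "b \<le> 1"
  shows "curve_length dd \<gamma> a b < \<infinity>"
proof -
  have "curve_length dd \<gamma> a b \<le> curve_length dd \<gamma> 0 b" using length_mono2 assms by simp
  also have "\<dots> \<le> curve_length dd \<gamma> 0 1" using length_mono assms by simp
  finally show ?thesis using fin by simp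
qed

lemma length_right_small:
  assumes cur: "d_curve dd \<gamma>" and fin: "curve_length dd \<gamma> 0 1 < \<infinity>"
    and x: "0 \<le> x" "x < 1" and \<epsilon>: "\<epsilon> > 0"
  shows "\<exists>h>0. x + h \<le> 1 \<and> curve_length dd \<gamma> x (x+h) < ennreal \<epsilon>"
proof -
  define L where "L = curve_length dd \<gamma> x 1"
  have Lfin: "L < \<infinity>" unfolding L_def using length_finite[OF fin] x by simp
  define Lr where "Lr = enn2real L"
  have LLr: "L = ennreal Lr" unfolding Lr_def using Lfin by simp
  have Lr0: "0 \<le> Lr" unfolding Lr_def by simp
  show ?thesis
  proof (cases "Lr = 0")
    case True
    have "curve_length dd \<gamma> x (x + (1-x)/2) \<le> L"
      unfolding L_def using x by (intro length_mono) (auto simp: field_simps)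
    moreover have "x + (1-x)/2 \<le> 1" using x by (simp add: field_simps)
    moreover have "(1-x)/2 > 0" using x by (simp add: field_simps)
    ultimately show ?thesis using True LLr x \<epsilon>
      by (intro exI[of _ "(1-x)/2"]) auto
  next
    case False
    then have Lpos: "Lr > 0" using Lr0 by simp
    have "ennreal (max 0 (Lr - \<epsilon>/2)) < L"
      unfolding LLr using Lpos \<epsilon> by (intro ennreal_lessI) auto
    then obtain p where p: "p \<in> parts x 1" "ennreal (max 0 (Lr - \<epsilon>/2)) < psum dd \<gamma> p"
      unfolding L_def curve_length_alt less_SUP_iff by blast
    obtain n t where nt: "p = (n,t)" by (cases p)
    have pn: "(n,t) \<in> parts x 1" using p nt by simp
    have t: "t 0 = x" "t n = 1" using pn unfolding parts_def by auto
    have n0: "0 < n" using t x by (cases n) auto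
    define T where "T = t ` {i. i \<le> n \<and> x < t i}"
    have Tfin: "finite T" unfolding T_def by simp
    have Tne: "T \<noteq> {}" unfolding T_def using t x by auto
    define t1 where "t1 = Min T"
    have t1x: "x < t1" unfolding t1_def using Tfin Tne T_def by auto
    have t1le: "\<And>i. i \<le> n \<Longrightarrow> x < t i \<Longrightarrow> t1 \<le> t i"
      unfolding t1_def T_def using Tfin by auto
    have "\<forall>e>0. \<exists>\<delta>>0. \<forall>s\<in>{0..1}. \<bar>s - x\<bar> < \<delta> \<longrightarrow> dd (\<gamma> s) (\<gamma> x) < e"
      using cur x unfolding d_curve_def by auto
    then have "\<exists>\<delta>>0. \<forall>s\<in>{0..1}. \<bar>s - x\<bar> < \<delta> \<longrightarrow> dd (\<gamma> s) (\<gamma> x) < \<epsilon>/2"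
      using \<epsilon> by (meson half_gt_zero)
    then obtain \<eta> where \<eta>: "\<eta> > 0" "\<And>s. s\<in>{0..1} \<Longrightarrow> \<bar>s - x\<bar> < \<eta> \<Longrightarrow> dd (\<gamma> s) (\<gamma> x) < \<epsilon>/2"
      by blast
    define h where "h = min (\<eta>/2) ((t1 - x)/2)"
    have hm: "h \<le> \<eta>/2" "h \<le> (t1 - x)/2" unfolding h_def by (rule min.cobounded1, rule min.cobounded2)
    have h0: "0 < h" unfolding h_def using \<eta>(1) t1x by simp
    have h: "0 < h" "h < \<eta>" "x + h < t1" using hm h0 \<eta>(1) t1x by (simp_all add: field_simps)
    have t1_1: "t1 \<le> 1" using t1le[of n] t x by simp
    define b where "b = x + h"
    have b: "x \<le> b" "b \<le> 1" "b < t1" using h t1_1 unfolding b_def by auto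
    obtain k where k: "k < n" "\<forall>i\<le>k. t i \<le> b"
      "psum dd \<gamma> (n,t) \<le> psum dd \<gamma> (Suc k, \<lambda>i. if i \<le> k then t i else b)
        + psum dd \<gamma> (n - k, \<lambda>i. if i = 0 then b else t (k+i))"
      "(n - k, \<lambda>i. if i = 0 then b else t (k+i)) \<in> parts b 1"
      using length_split_part[OF pn b(1) b(2) n0, of \<gamma>] by blast
    have tix: "\<And>i. i \<le> k \<Longrightarrow> t i = x"
    proof -
      fix i assume i: "i \<le> k"
      have "x \<le> t i" using parts_range(1)[OF pn, of i] i k(1) by simp
      moreover have "\<not> x < t i"
      proof
        assume "x < t i"
        then have "t1 \<le> t i" using t1le[of i] i k(1) by simp
        then show False using k(2) i b(3) by force
      qed
      ultimately show "t i = x" by simp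
    qed
    have ps1: "psum dd \<gamma> (Suc k, \<lambda>i. if i \<le> k then t i else b) = ennreal (dd (\<gamma> x) (\<gamma> b))"
    proof -
      have "(\<Sum>i<k. ennreal (dd (\<gamma> (if i \<le> k then t i else b)) (\<gamma> (if Suc i \<le> k then t (Suc i) else b)))) = 0"
        by (rule sum.neutral) (auto simp: tix refl0)
      then show ?thesis unfolding psum_def fst_conv snd_conv sum.lessThan_Suc using tix[of k] by simp
    qed
    have dxb: "dd (\<gamma> x) (\<gamma> b) < \<epsilon>/2"
      using \<eta>(2)[of b] b x h(2) unfolding b_def by (simp add: symm)
    have ps2: "psum dd \<gamma> (n - k, \<lambda>i. if i = 0 then b else t (k+i)) \<le> curve_length dd \<gamma> b 1"
      unfolding curve_length_alt by (rule SUP_upper[OF k(4)])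
    define A where "A = enn2real (curve_length dd \<gamma> x b)"
    define B where "B = enn2real (curve_length dd \<gamma> b 1)"
    have Afin: "curve_length dd \<gamma> x b = ennreal A" unfolding A_def
      using length_finite[OF fin, of x b] b x by simp
    have Bfin: "curve_length dd \<gamma> b 1 = ennreal B" unfolding B_def
      using length_finite[OF fin, of b 1] b x by simp
    have AB: "A \<ge> 0" "B \<ge> 0" unfolding A_def B_def by auto
    have "L = ennreal A + ennreal B" unfolding L_def Afin[symmetric] Bfin[symmetric]
      by (rule length_add) (use b in auto)
    then have LrAB: "Lr = A + B" using LLr AB Lr0 by (simp add: ennreal_plus[symmetric] del: ennreal_plus)
    have "psum dd \<gamma> p \<le> ennreal (dd (\<gamma> x) (\<gamma> b)) + ennreal B"
      using k(3) ps1 ps2 Bfin nt by (metis add_left_mono order_trans)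
    then have "ennreal (max 0 (Lr - \<epsilon>/2)) < ennreal (dd (\<gamma> x) (\<gamma> b)) + ennreal B"
      using p(2) by (rule order.strict_trans2[rotated])
    also have "\<dots> = ennreal (dd (\<gamma> x) (\<gamma> b) + B)" using AB nonneg by (simp add: ennreal_plus)
    finally have "max 0 (Lr - \<epsilon>/2) < dd (\<gamma> x) (\<gamma> b) + B"
      by (subst (asm) ennreal_less_iff) auto
    then have "A < \<epsilon>" using dxb LrAB by linarith
    then have "ennreal A < ennreal \<epsilon>" using \<epsilon> by (intro ennreal_lessI)
    then show ?thesis using h b Afin unfolding b_def
      by (intro exI[of _ h]) auto
  qed
qed

lemma arclen_diff:
  assumes fin: "curve_length dd \<gamma> 0 1 < \<infinity>" and xy: "x \<le> y"
  shows "arclen dd \<gamma> y - arclen dd \<gamma> x = enn2real (curve_length dd \<gamma> (clmp x) (clmp y))"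
    and "curve_length dd \<gamma> (clmp x) (clmp y) < \<infinity>"
proof -
  have c: "0 \<le> clmp x" "clmp x \<le> clmp y" "clmp y \<le> 1"
    using clmp_range clmp_mono[OF xy] by auto
  have e: "curve_length dd \<gamma> 0 (clmp y) = curve_length dd \<gamma> 0 (clmp x) + curve_length dd \<gamma> (clmp x) (clmp y)"
    by (rule length_add) (use c in auto)
  have f1: "curve_length dd \<gamma> 0 (clmp x) < \<infinity>" using length_finite[OF fin] c by simp
  show f2: "curve_length dd \<gamma> (clmp x) (clmp y) < \<infinity>" using length_finite[OF fin] c by simp
  show "arclen dd \<gamma> y - arclen dd \<gamma> x = enn2real (curve_length dd \<gamma> (clmp x) (clmp y))"
    unfolding arclen_clmp e using f1 f2 by (simp add: enn2real_plus)
qed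

lemma arclen_mono:
  assumes fin: "curve_length dd \<gamma> 0 1 < \<infinity>" and xy: "x \<le> y"
  shows "arclen dd \<gamma> x \<le> arclen dd \<gamma> y"
proof -
  have "0 \<le> enn2real (curve_length dd \<gamma> (clmp x) (clmp y))" by simp
  then have "0 \<le> arclen dd \<gamma> y - arclen dd \<gamma> x" using arclen_diff(1)[OF fin xy] by simp
  then show ?thesis by simp
qed

lemma arclen_right_cont:
  assumes rect: "d_rectifiable dd \<gamma>"
  shows "continuous (at_right a) (arclen dd \<gamma>)"
proof -
  have cur: "d_curve dd \<gamma>" and fin: "curve_length dd \<gamma> 0 1 < \<infinity>"
    using rect unfolding d_rectifiable_def by auto
  show ?thesis
  proof (subst continuous_at_right_real_increasing)
    show "\<And>x y. x \<le> y \<Longrightarrow> arclen dd \<gamma> x \<le> arclen dd \<gamma> y" by (rule arclen_mono[OF fin])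
    show "\<forall>\<epsilon>>0. \<exists>\<delta>>0. arclen dd \<gamma> (a + \<delta>) - arclen dd \<gamma> a < \<epsilon>"
    proof (intro allI impI)
      fix \<epsilon> :: real assume \<epsilon>: "\<epsilon> > 0"
      show "\<exists>\<delta>>0. arclen dd \<gamma> (a + \<delta>) - arclen dd \<gamma> a < \<epsilon>"
      proof (cases "a < 0")
        case True
        have "clmp (a + (-a/2)) = clmp a" using True unfolding clmp_def by auto
        then show ?thesis using True \<epsilon> unfolding arclen_clmp by (intro exI[of _ "-a/2"]) auto
      next
        case False
        show ?thesis
        proof (cases "a < 1")
          case False
          have "clmp (a + 1) = clmp a" using False unfolding clmp_def by auto
          then show ?thesis using \<epsilon> unfolding arclen_clmp by (intro exI[of _ 1]) auto
        next
          case True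
          obtain h where h: "h > 0" "a + h \<le> 1" "curve_length dd \<gamma> a (a+h) < ennreal \<epsilon>"
            using length_right_small[OF cur fin _ True \<epsilon>] \<open>\<not> a < 0\<close> by auto
          have "arclen dd \<gamma> (a + h) - arclen dd \<gamma> a = enn2real (curve_length dd \<gamma> a (a+h))"
            using arclen_diff(1)[OF fin, of a "a+h"] h \<open>\<not> a < 0\<close> True by (simp add: clmp_id)
          also have "\<dots> < \<epsilon>"
          proof -
            have "curve_length dd \<gamma> a (a+h) \<noteq> \<infinity>" using h(3) by auto
            then have f: "curve_length dd \<gamma> a (a+h) < \<infinity>" by (simp add: less_top)
            define c where "c = enn2real (curve_length dd \<gamma> a (a+h))"
            have c: "curve_length dd \<gamma> a (a+h) = ennreal c" "0 \<le> c"
              unfolding c_def using f by auto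
            then show ?thesis using h(3) \<epsilon> unfolding c_def[symmetric] by (simp add: ennreal_less_iff)
          qed
          finally show ?thesis using h by blast
        qed
      qed
    qed
  qed
qed

lemma emeasure_arclen_Ioc:
  assumes rect: "d_rectifiable dd \<gamma>" and ab: "a \<le> b"
  shows "emeasure (interval_measure (arclen dd \<gamma>)) {a<..b} = curve_length dd \<gamma> (clmp a) (clmp b)"
proof -
  have fin: "curve_length dd \<gamma> 0 1 < \<infinity>" using rect unfolding d_rectifiable_def by auto
  have "emeasure (interval_measure (arclen dd \<gamma>)) {a<..b} = ennreal (arclen dd \<gamma> b - arclen dd \<gamma> a)"
    by (rule emeasure_interval_measure_Ioc[OF ab arclen_mono[OF fin] arclen_right_cont[OF rect]])
  also have "\<dots> = curve_length dd \<gamma> (clmp a) (clmp b)"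
    using arclen_diff[OF fin ab] by simp
  finally show ?thesis .
qed

end


section \<open>Metric basics\<close>

locale mspace =
  fixes d :: "'a \<Rightarrow> 'a \<Rightarrow> real" and a :: 'a
  assumes metric: "metric_on d"
begin

lemma d_nonneg: "0 \<le> d x y" using metric unfolding metric_on_def by auto
lemma d_refl: "d x x = 0" using metric unfolding metric_on_def by auto
lemma d_eq0: "d x y = 0 \<longleftrightarrow> x = y" using metric unfolding metric_on_def by auto
lemma d_sym: "d x y = d y x" using metric unfolding metric_on_def by auto
lemma d_tri: "d x z \<le> d x y + d y z" using metric unfolding metric_on_def by auto

sublocale d: pmet d
  by unfold_locales (rule d_nonneg, rule d_refl, rule d_sym, rule d_tri)

definition N :: "'a \<Rightarrow> real" where "N x = 1 + d x a"

lemma N_ge1: "1 \<le> N x" unfolding N_def using d_nonneg by simp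
lemma N_pos: "0 < N x" using N_ge1[of x] by simp
lemma N_lip: "N y \<le> N x + d x y" "N x - d x y \<le> N y"
  unfolding N_def using d_tri[where x=y and y=x and z=a] d_tri[where x=x and y=y and z=a] d_sym[of x y] by auto

lemma da_SS: "d_a d a (Some x) (Some y) = d x y / (N x * N y)"
  unfolding N_def by simp
lemma da_SN: "d_a d a (Some x) None = 1 / N x" unfolding N_def by simp
lemma da_NS: "d_a d a None (Some x) = 1 / N x" unfolding N_def by simp

lemma da_nonneg: "0 \<le> d_a d a u v"
  by (cases u; cases v) (auto simp: da_SS da_SN da_NS d_nonneg N_pos less_imp_le)

lemma da_sym: "d_a d a u v = d_a d a v u"
  by (cases u; cases v) (auto simp: da_SS da_SN da_NS d_sym mult.commute)

lemma da_le: "d_a d a (Some x) (Some y) \<le> d x y"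
proof -
  have "N x * N y \<ge> 1" using N_ge1[of x] N_ge1[of y] by (metis mult_mono' mult_1 zero_le_one)
  then show ?thesis unfolding da_SS using d_nonneg[of x y]
    by (simp add: divide_le_eq mult_le_cancel_left1 mult.commute)
qed

end

section \<open>Chain sums\<close>

fun csum :: "('b \<Rightarrow> 'b \<Rightarrow> real) \<Rightarrow> 'b list \<Rightarrow> real" where
  "csum f (x # y # xs) = f x y + csum f (y # xs)"
| "csum f _ = 0"

lemma csum_eq_sum: "(\<Sum>j<length xs - 1. f (xs ! j) (xs ! Suc j)) = csum f xs"
proof (induction f xs rule: csum.induct)
  case (1 f x y xs)
  have "(\<Sum>j<length (x # y # xs) - 1. f ((x # y # xs) ! j) ((x # y # xs) ! Suc j))
      = (\<Sum>j<Suc (length (y # xs) - 1). f ((x # y # xs) ! j) ((x # y # xs) ! Suc j))"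
    by simp
  also have "\<dots> = f x y + (\<Sum>j<length (y # xs) - 1. f ((y # xs) ! j) ((y # xs) ! Suc j))"
    unfolding sum.lessThan_Suc_shift by simp
  finally show ?case using 1 by simp
qed auto

lemma csum_append: "csum f (xs @ y # ys) = csum f (xs @ [y]) + csum f (y # ys)"
proof (induction xs)
  case Nil then show ?case by simp
next
  case (Cons x xs)
  then show ?case by (cases xs) auto
qed

lemma csum_rev:
  assumes sym: "\<And>u v. f u v = f v u"
  shows "csum f (rev xs) = csum f xs"
proof (induction xs rule: induct_list012)
  case (3 x y zs)
  have "csum f (rev (x # y # zs)) = csum f (rev zs @ y # [x])" by simp
  also have "\<dots> = csum f (rev (y # zs)) + csum f [y, x]" using csum_append[of f "rev zs" y "[x]"] by simp
  also have "\<dots> = csum f (y # zs) + f x y" using 3(2) sym[of y x] by simp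
  finally show ?case by simp
qed auto

lemma csum_nonneg:
  assumes "\<And>u v. 0 \<le> f u v" shows "0 \<le> csum f xs"
proof (induction xs rule: induct_list012)
  case (3 x y zs)
  then show ?case using assms[of x y] by simp
qed auto

definition chains :: "'b \<Rightarrow> 'b \<Rightarrow> 'b list set" where
  "chains x y = {xs. xs \<noteq> [] \<and> hd xs = x \<and> last xs = y}"

lemma chains_pair: "[x, y] \<in> chains x y" unfolding chains_def by simp
lemma chains_single: "[x] \<in> chains x x" unfolding chains_def by simp

lemma chains_rev: "xs \<in> chains x y \<Longrightarrow> rev xs \<in> chains y x"
  unfolding chains_def by (simp add: hd_rev last_rev)

lemma chains_concat:
  assumes "xs \<in> chains x y" "ys \<in> chains y z"
  shows "xs @ tl ys \<in> chains x z" "csum f (xs @ tl ys) = csum f xs + csum f ys"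
proof -
  have xs1: "xs \<noteq> []" "last xs = y" using assms(1) unfolding chains_def by auto
  have ys1: "ys \<noteq> []" "hd ys = y" using assms(2) unfolding chains_def by auto
  define xs0 where "xs0 = butlast xs"
  define ys0 where "ys0 = tl ys"
  have xs: "xs = xs0 @ [y]" unfolding xs0_def using append_butlast_last_id[OF xs1(1)] xs1(2) by simp
  have ys: "ys = y # ys0" unfolding ys0_def using list.collapse[OF ys1(1)] ys1(2) by simp
  show "xs @ tl ys \<in> chains x z" using assms unfolding chains_def xs ys
    by (cases ys0) (auto simp: hd_append)
  show "csum f (xs @ tl ys) = csum f xs + csum f ys"
    unfolding xs ys using csum_append[of f xs0 y ys0] by simp
qed

context mspace
begin

lemma hat_d_alt: "hat_d d a u v = (INF xs\<in>chains u v. csum (d_a d a) xs)"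
  unfolding hat_d_def chains_def csum_eq_sum ..

lemma csum_da_nonneg: "0 \<le> csum (d_a d a) xs"
  by (rule csum_nonneg) (rule da_nonneg)

lemma hat_bdd: "bdd_below ((\<lambda>xs. csum (d_a d a) xs) ` chains u v)"
  using csum_da_nonneg by (intro bdd_belowI[of _ 0]) auto

lemma hat_le_chain: "xs \<in> chains u v \<Longrightarrow> hat_d d a u v \<le> csum (d_a d a) xs"
  unfolding hat_d_alt by (rule cINF_lower[OF hat_bdd])

lemma hat_ge: "(\<And>xs. xs \<in> chains u v \<Longrightarrow> L \<le> csum (d_a d a) xs) \<Longrightarrow> L \<le> hat_d d a u v"
  unfolding hat_d_alt using chains_pair[of u v] by (intro cINF_greatest) auto

lemma hat_nonneg: "0 \<le> hat_d d a u v"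
  by (rule hat_ge) (rule csum_da_nonneg)

lemma hat_refl: "hat_d d a u u = 0"
  using hat_le_chain[OF chains_single[of u]] hat_nonneg[of u u] by simp

lemma hat_le_da: "hat_d d a u v \<le> d_a d a u v"
  using hat_le_chain[OF chains_pair[of u v]] by simp

lemma hat_le_d: "hat_d d a (Some x) (Some y) \<le> d x y"
  using hat_le_da[of "Some x" "Some y"] da_le[of x y] by simp

lemma hat_le_da': "hat_d d a (Some x) (Some y) \<le> d x y / (N x * N y)"
  using hat_le_da[of "Some x" "Some y"] unfolding da_SS .

lemma hat_sym: "hat_d d a u v = hat_d d a v u"
proof -
  have *: "hat_d d a u v \<le> hat_d d a v u" for u v
  proof (rule hat_ge)
    fix xs assume "xs \<in> chains v u"
    then have "hat_d d a u v \<le> csum (d_a d a) (rev xs)" by (intro hat_le_chain chains_rev)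
    then show "hat_d d a u v \<le> csum (d_a d a) xs" using csum_rev[of "d_a d a" xs] da_sym by simp
  qed
  show ?thesis using *[of u v] *[of v u] by simp
qed

lemma hat_tri: "hat_d d a u w \<le> hat_d d a u v + hat_d d a v w"
proof -
  have *: "hat_d d a u w - csum (d_a d a) ys \<le> hat_d d a u v" if ys: "ys \<in> chains v w" for ys
  proof (rule hat_ge)
    fix xs assume xs: "xs \<in> chains u v"
    have "hat_d d a u w \<le> csum (d_a d a) (xs @ tl ys)" by (rule hat_le_chain[OF chains_concat(1)[OF xs ys]])
    then show "hat_d d a u w - csum (d_a d a) ys \<le> csum (d_a d a) xs"
      unfolding chains_concat(2)[OF xs ys] by simp
  qed
  have "hat_d d a u w - hat_d d a u v \<le> hat_d d a v w"
  proof (rule hat_ge)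
    fix ys assume "ys \<in> chains v w"
    from *[OF this] show "hat_d d a u w - hat_d d a u v \<le> csum (d_a d a) ys" by linarith
  qed
  then show ?thesis by simp
qed

sublocale hat: pmet "hat_d d a"
  by unfold_locales (rule hat_nonneg, rule hat_refl, rule hat_sym, rule hat_tri)

end


lemma escape_num1:
  fixes A D M r :: real
  assumes "0 \<le> A" "0 \<le> D" "0 < r" "r \<le> A + D" "0 < M"
  shows "r / (M * (M + r)) \<le> (A + D) / (M * (M + D))"
proof -
  have "r * (M * (M + D)) \<le> (A + D) * (M * (M + r))"
  proof -
    have "r * (M + D) \<le> (A + D) * (M + r)"
    proof -
      have "r * (M + D) = r * M + r * D" by (simp add: algebra_simps)
      also have "\<dots> \<le> (A + D) * M + (A + D) * r"
        using assms by (intro add_mono mult_right_mono) (auto intro: mult_mono)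
      finally show ?thesis by (simp add: algebra_simps)
    qed
    then show ?thesis using assms by (metis mult.assoc mult.left_commute mult_le_cancel_left_pos)
  qed
  then show ?thesis using assms by (simp add: divide_simps)
qed

lemma escape_num:
  fixes A D M P Q r :: real
  assumes A: "0 \<le> A" and D: "0 \<le> D" and r: "0 < r" "r \<le> A + D" and P: "0 < P" "P \<le> M"
    and Q: "0 < Q" "Q \<le> P + D"
  shows "r / (M * (M + r)) \<le> A / M^2 + D / (P * Q)"
proof -
  have M: "0 < M" using P by simp
  have PQ: "P * Q \<le> M * (M + D)" using P Q D by (intro mult_mono) auto
  have 1: "D / (M * (M + D)) \<le> D / (P * Q)"
    using PQ D P Q by (intro divide_left_mono) auto
  have 2: "A / (M * (M + D)) \<le> A / M^2"
    using A D M by (intro divide_left_mono) (auto simp: power2_eq_square)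
  have "r / (M * (M + r)) \<le> (A + D) / (M * (M + D))"
    by (rule escape_num1) (use A D r M in auto)
  also have "\<dots> = A / (M * (M + D)) + D / (M * (M + D))" by (simp add: add_divide_distrib)
  also have "\<dots> \<le> A / M^2 + D / (P * Q)" using 1 2 by simp
  finally show ?thesis .
qed

context mspace
begin

definition hpsi :: "'a \<Rightarrow> real \<Rightarrow> 'a option \<Rightarrow> real" where
  "hpsi x r z = (let M = N x + r; c = r / (M * (M + r)) in
     (case z of None \<Rightarrow> c | Some y \<Rightarrow> min c (d x y / M^2)))"

lemma hpsi_le_c: "hpsi x r z \<le> r / ((N x + r) * ((N x + r) + r))"
  unfolding hpsi_def Let_def by (cases z) auto

lemma chain_lower:
  assumes r: "0 < r"
  shows "zs \<noteq> [] \<Longrightarrow> hd zs = Some v \<Longrightarrow> d x v < r \<Longrightarrow>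
    hpsi x r (last zs) \<le> d x v / (N x + r)^2 + csum (d_a d a) zs"
proof (induction zs arbitrary: v rule: induct_list012)
  case 1 then show ?case by simp
next
  case (2 z)
  then have "z = Some v" by simp
  then show ?case unfolding hpsi_def Let_def by simp
next
  case (3 z w zs)
  define M where "M = N x + r"
  define c where "c = r / (M * (M + r))"
  have M1: "1 \<le> M" unfolding M_def using N_ge1[of x] r by simp
  have zv: "z = Some v" using 3 by simp
  have hv: "N v \<le> M" unfolding M_def using N_lip(1)[of v x] 3(5) by simp
  have cs: "csum (d_a d a) (z # w # zs) = d_a d a (Some v) w + csum (d_a d a) (w # zs)"
    using zv by simp
  have rest: "0 \<le> csum (d_a d a) (w # zs)" by (rule csum_da_nonneg)
  have le_c: "hpsi x r (last (z # w # zs)) \<le> c" unfolding c_def M_def by (rule hpsi_le_c)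
  have A0: "0 \<le> d x v / M^2" using d_nonneg by simp
  show ?case
  proof (cases w)
    case None
    have "c \<le> 1 / M"
    proof -
      have "r / (M + r) \<le> 1" using r M1 by simp
      then have "r / (M + r) / M \<le> 1 / M" using M1 by (intro divide_right_mono) auto
      then show ?thesis unfolding c_def by (simp add: field_simps)
    qed
    also have "1 / M \<le> 1 / N v" using hv N_pos[of v] by (intro divide_left_mono) auto
    also have "\<dots> = d_a d a (Some v) w" by (simp only: None da_SN)
    finally show ?thesis using le_c cs rest A0 unfolding M_def by simp
  next
    case (Some u)
    show ?thesis
    proof (cases "d x u < r")
      case True
      have IH: "hpsi x r (last (w # zs)) \<le> d x u / M^2 + csum (d_a d a) (w # zs)"
        using 3(2)[of u] Some True unfolding M_def by simp
      have hu: "N u \<le> M" unfolding M_def using N_lip(1)[of u x] True by simp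
      have "d v u / M^2 \<le> d v u / (N v * N u)"
      proof (rule divide_left_mono)
        show "N v * N u \<le> M^2" unfolding power2_eq_square
          using hv hu N_pos[of v] N_pos[of u] by (intro mult_mono) auto
        show "0 < M^2 * (N v * N u)" using M1 N_pos[of v] N_pos[of u] by simp
      qed (rule d_nonneg)
      also have "\<dots> = d_a d a (Some v) w" by (simp only: Some da_SS)
      finally have st: "d v u / M^2 \<le> d_a d a (Some v) w" .
      have "d x u / M^2 \<le> d x v / M^2 + d v u / M^2"
        using d_tri[where x=x and y=v and z=u] M1 by (simp add: add_divide_distrib[symmetric] divide_right_mono)
      then show ?thesis using IH st cs unfolding M_def by simp
    next
      case False
      have hu: "N u \<le> N v + d v u" using N_lip(1)[of u v] .
      have "c \<le> d x v / M^2 + d v u / (N v * N u)"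
        unfolding c_def
      proof (rule escape_num)
        show "r \<le> d x v + d v u" using False d_tri[where x=x and y=v and z=u] by simp
      qed (use r d_nonneg N_pos hv hu in auto)
      also have "\<dots> = d x v / M^2 + d_a d a (Some v) w" by (simp only: Some da_SS)
      finally show ?thesis using le_c cs rest unfolding M_def by simp
    qed
  qed
qed

lemma hat_lower:
  assumes r: "0 < r"
  shows "hpsi x r z \<le> hat_d d a (Some x) z"
proof (rule hat_ge)
  fix zs assume "zs \<in> chains (Some x) z"
  then have "zs \<noteq> []" "hd zs = Some x" "last zs = z" unfolding chains_def by auto
  then show "hpsi x r z \<le> csum (d_a d a) zs"
    using chain_lower[OF r, of zs x x] r d_refl[of x] by simp
qed

lemma hat_ball_small:
  assumes r: "0 < r"
  shows "\<exists>\<epsilon>>0. \<forall>z. hat_d d a (Some x) z < \<epsilon> \<longrightarrow> (\<exists>y. z = Some y \<and> d x y < r)"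
proof -
  define M where "M = N x + r"
  define c where "c = r / (M * (M + r))"
  have M1: "1 \<le> M" unfolding M_def using N_ge1[of x] r by simp
  have c0: "0 < c" unfolding c_def using r M1 by simp
  show ?thesis
  proof (intro exI[of _ "min c (r / M^2)"] conjI allI impI)
    show "0 < min c (r / M^2)" using c0 r M1 by simp
  next
    fix z assume z: "hat_d d a (Some x) z < min c (r / M^2)"
    have lo: "hpsi x r z \<le> hat_d d a (Some x) z" by (rule hat_lower[OF r])
    show "\<exists>y. z = Some y \<and> d x y < r"
    proof (cases z)
      case None
      then have "hpsi x r z = c" unfolding hpsi_def c_def M_def Let_def by simp
      then show ?thesis using lo z by simp
    next
      case (Some y)
      then have "hpsi x r z = min c (d x y / M^2)" unfolding hpsi_def c_def M_def Let_def by simp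
      then have "min c (d x y / M^2) < min c (r / M^2)" using lo z by simp
      then have "d x y / M^2 < r / M^2" by (auto simp: min_def split: if_splits)
      then have "d x y < r" using M1 by (simp add: divide_strict_right_mono_neg divide_less_cancel)
      then show ?thesis using Some by simp
    qed
  qed
qed

lemma hat_local:
  assumes \<rho>: "0 < \<rho>" "\<rho> \<le> 1/4" and y: "d x y < \<rho>" and y': "d x y' < \<rho>"
  shows "d y y' / (N x + 5 * \<rho>)^2 \<le> hat_d d a (Some y) (Some y')"
    and "hat_d d a (Some y) (Some y') \<le> d y y' / (N x - \<rho>)^2"
proof -
  define r where "r = 4 * \<rho>"
  define M where "M = N y + r"
  have r: "0 < r" "r \<le> 1" unfolding r_def using \<rho> by auto
  have M1: "1 \<le> M" unfolding M_def using N_ge1[of y] r by simp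
  have Mle: "M \<le> N x + 5 * \<rho>" unfolding M_def r_def using N_lip(1)[of y x] y by simp
  have dyy: "d y y' < 2 * \<rho>" using d_tri[where x=y and y=x and z=y'] d_sym[of x y] y y' by simp
  have "d y y' / M^2 \<le> r / (M * (M + r))"
  proof -
    have "d y y' * (M * (M + r)) \<le> r * M^2"
    proof -
      have "d y y' * (M + r) \<le> r * M"
      proof -
        have "d y y' * (M + r) \<le> (r/2) * (M + r)" using dyy r M1 unfolding r_def
          by (intro mult_right_mono) auto
        also have "\<dots> \<le> (r/2) * (M + M)" using r M1 by (intro mult_left_mono) auto
        finally show ?thesis by simp
      qed
      then have "M * (d y y' * (M + r)) \<le> M * (r * M)" using M1 by (intro mult_left_mono) auto
      then show ?thesis by (simp add: power2_eq_square algebra_simps)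
    qed
    then show ?thesis using M1 r by (simp add: divide_simps)
  qed
  then have "hpsi y r (Some y') = d y y' / M^2" unfolding hpsi_def M_def Let_def by (simp add: min_def)
  then have "d y y' / M^2 \<le> hat_d d a (Some y) (Some y')" using hat_lower[OF r(1), of y "Some y'"] by simp
  moreover have "d y y' / (N x + 5 * \<rho>)^2 \<le> d y y' / M^2"
    using Mle M1 d_nonneg by (intro divide_left_mono power_mono) auto
  ultimately show "d y y' / (N x + 5 * \<rho>)^2 \<le> hat_d d a (Some y) (Some y')" by simp
  have lo: "N x - \<rho> \<le> N y" "N x - \<rho> \<le> N y'" "0 < N x - \<rho>"
    using N_lip(2)[of x y] N_lip(2)[of x y'] y y' N_ge1[of x] \<rho> by auto
  have "hat_d d a (Some y) (Some y') \<le> d y y' / (N y * N y')" by (rule hat_le_da')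
  also have "\<dots> \<le> d y y' / (N x - \<rho>)^2"
    using lo d_nonneg unfolding power2_eq_square by (intro divide_left_mono mult_mono) auto
  finally show "hat_d d a (Some y) (Some y') \<le> d y y' / (N x - \<rho>)^2" .
qed

end


lemma num32:
  fixes N \<rho> :: real
  assumes N: "1 \<le> N" and \<rho>: "0 < \<rho>" "\<rho> \<le> 1/4"
  shows "1/(N - \<rho>)^2 - 1/(N + 5*\<rho>)^2 \<le> 32 * \<rho>"
proof -
  define u where "u = N - \<rho>"
  define v where "v = N + 5*\<rho>"
  have u: "3/4 \<le> u" and uv: "u \<le> v" and vu: "v - u = 6 * \<rho>"
    unfolding u_def v_def using N \<rho> by auto
  have u0: "0 < u" using u by simp
  have v0: "0 < v" using u uv by simp
  have e: "1/u^2 - 1/v^2 = (v-u)*(v+u)/(u^2 * v^2)"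
    using u0 v0 by (simp add: field_simps power2_eq_square)
  have f: "(v+u)/(u^2 * v^2) \<le> 2/u^3"
  proof -
    have "(v+u) * u^3 \<le> 2 * (u^2 * v^2)"
    proof -
      have "(v + u) * u \<le> 2 * v^2"
      proof -
        have "v * u \<le> v * v" using uv v0 by (intro mult_left_mono) auto
        moreover have "u * u \<le> v * v" using uv u0 by (intro mult_mono) auto
        ultimately show ?thesis unfolding power2_eq_square by (simp add: algebra_simps)
      qed
      then have "((v + u) * u) * u^2 \<le> (2 * v^2) * u^2" using u0 by (intro mult_right_mono) auto
      then show ?thesis by (simp add: power2_eq_square power3_eq_cube algebra_simps)
    qed
    then show ?thesis using u0 v0 by (simp add: divide_simps)
  qed
  have g: "2/u^3 \<le> 128/27"
  proof -
    have "(3/4)^3 \<le> u^3" using u by (intro power_mono) auto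
    then have "27/64 \<le> u^3" by (simp add: power3_eq_cube)
    then show ?thesis using u0 by (simp add: divide_simps)
  qed
  have "1/u^2 - 1/v^2 = (v-u) * ((v+u)/(u^2 * v^2))" unfolding e by simp
  also have "\<dots> \<le> (6 * \<rho>) * (128/27)" unfolding vu using order_trans[OF f g] \<rho> by (intro mult_left_mono) auto
  also have "\<dots> \<le> 32 * \<rho>" using \<rho> by simp
  finally show ?thesis unfolding u_def v_def .
qed

lemma small_steps:
  fixes P :: "real \<Rightarrow> real \<Rightarrow> bool"
  assumes \<delta>: "\<delta> > 0"
    and small: "\<And>a b. lo \<le> a \<Longrightarrow> a \<le> b \<Longrightarrow> b \<le> hi \<Longrightarrow> b - a < \<delta> \<Longrightarrow> P a b"
    and trans: "\<And>a b c. lo \<le> a \<Longrightarrow> a \<le> b \<Longrightarrow> b \<le> c \<Longrightarrow> c \<le> hi \<Longrightarrow> P a b \<Longrightarrow> P b c \<Longrightarrow> P a c"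
    and ab: "lo \<le> a" "a \<le> b" "b \<le> hi"
  shows "P a b"
proof -
  have *: "\<forall>a b. lo \<le> a \<and> a \<le> b \<and> b \<le> hi \<and> b - a < real (Suc n) * (\<delta>/2) \<longrightarrow> P a b" for n
  proof (induction n)
    case 0
    then show ?case using small \<delta> by auto
  next
    case (Suc n)
    show ?case
    proof (intro allI impI)
      fix a b assume h: "lo \<le> a \<and> a \<le> b \<and> b \<le> hi \<and> b - a < real (Suc (Suc n)) * (\<delta>/2)"
      show "P a b"
      proof (cases "b - a < \<delta>")
        case True then show ?thesis using small h by auto
      next
        case False
        define c where "c = b - \<delta>/2"
        have c: "a \<le> c" "c \<le> b" "c - a < real (Suc n) * (\<delta>/2)" "b - c < \<delta>"
          using False h \<delta> unfolding c_def by (auto simp: field_simps)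
        have "P a c" using Suc.IH h c by auto
        moreover have "P c b" using small h c by auto
        ultimately show ?thesis using trans h c by blast
      qed
    qed
  qed
  obtain n where "b - a < real n * (\<delta>/2)" using ex_less_of_nat_mult[of "\<delta>/2" "b - a"] \<delta> by auto
  moreover have "real n * (\<delta>/2) \<le> real (Suc n) * (\<delta>/2)" using \<delta> by (intro mult_right_mono) auto
  ultimately have "b - a < real (Suc n) * (\<delta>/2)" by linarith
  then show ?thesis using * ab by blast
qed

lemma curve_length_compare2:
  assumes "\<And>s t. a \<le> s \<Longrightarrow> s \<le> t \<Longrightarrow> t \<le> b \<Longrightarrow>
             c * ennreal (d1 (\<gamma>1 s) (\<gamma>1 t)) \<le> ennreal (d2 (\<gamma>2 s) (\<gamma>2 t))"
  shows "c * curve_length d1 \<gamma>1 a b \<le> curve_length d2 \<gamma>2 a b"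
  unfolding curve_length_alt SUP_mult_left_ennreal
proof (rule SUP_mono)
  fix p assume p: "p \<in> parts a b"
  obtain n t where nt: "p = (n,t)" by (cases p)
  have "c * psum d1 \<gamma>1 p \<le> psum d2 \<gamma>2 p"
    unfolding psum_def nt sum_distrib_left fst_conv snd_conv
  proof (rule sum_mono)
    fix i assume "i \<in> {..<n}"
    then have "a \<le> t i" "t i \<le> t (Suc i)" "t (Suc i) \<le> b"
      using parts_range[of n t a b] parts_mono[of n t a b i "Suc i"] p nt by auto
    then show "c * ennreal (d1 (\<gamma>1 (t i)) (\<gamma>1 (t (Suc i)))) \<le> ennreal (d2 (\<gamma>2 (t i)) (\<gamma>2 (t (Suc i))))"
      using assms by blast
  qed
  then show "\<exists>m\<in>parts a b. c * psum d1 \<gamma>1 p \<le> psum d2 \<gamma>2 m" using p by blast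
qed

context mspace
begin

lemma curve_hat_iff:
  assumes eq: "\<And>t::real. 0 \<le> t \<Longrightarrow> t \<le> 1 \<Longrightarrow> \<gamma>h t = Some (\<gamma> t)"
  shows "d_curve (hat_d d a) \<gamma>h \<longleftrightarrow> d_curve d \<gamma>"
proof
  assume hc: "d_curve (hat_d d a) \<gamma>h"
  show "d_curve d \<gamma>" unfolding d_curve_def
  proof (intro ballI allI impI)
    fix t e :: real assume t: "t \<in> {0..1}" and e: "e > 0"
    obtain \<epsilon> where \<epsilon>: "\<epsilon> > 0" "\<And>z. hat_d d a (Some (\<gamma> t)) z < \<epsilon> \<Longrightarrow> \<exists>y. z = Some y \<and> d (\<gamma> t) y < e"
      using hat_ball_small[OF e, of "\<gamma> t"] by blast
    have "\<forall>e>0. \<exists>\<delta>>0. \<forall>s\<in>{0..1}. \<bar>s - t\<bar> < \<delta> \<longrightarrow> hat_d d a (\<gamma>h s) (\<gamma>h t) < e"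
      using hc t unfolding d_curve_def by blast
    then obtain \<delta> where \<delta>: "\<delta> > 0" "\<And>s. s\<in>{0..1} \<Longrightarrow> \<bar>s - t\<bar> < \<delta> \<Longrightarrow> hat_d d a (\<gamma>h s) (\<gamma>h t) < \<epsilon>"
      using \<epsilon>(1) by blast
    show "\<exists>\<delta>>0. \<forall>s\<in>{0..1}. \<bar>s - t\<bar> < \<delta> \<longrightarrow> d (\<gamma> s) (\<gamma> t) < e"
    proof (intro exI[of _ \<delta>] conjI ballI impI)
      fix s assume s: "s \<in> {0..1}" "\<bar>s - t\<bar> < \<delta>"
      have "hat_d d a (\<gamma>h s) (\<gamma>h t) < \<epsilon>" using \<delta>(2) s by blast
      then have "hat_d d a (Some (\<gamma> s)) (Some (\<gamma> t)) < \<epsilon>" using eq s(1) t by auto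
      then have "hat_d d a (Some (\<gamma> t)) (Some (\<gamma> s)) < \<epsilon>"
        using hat_sym[of "Some (\<gamma> s)" "Some (\<gamma> t)"] by simp
      then obtain y where "Some (\<gamma> s) = Some y" "d (\<gamma> t) y < e" using \<epsilon>(2) by blast
      then show "d (\<gamma> s) (\<gamma> t) < e" using d_sym[of "\<gamma> s" "\<gamma> t"] by simp
    qed (rule \<delta>(1))
  qed
next
  assume dc: "d_curve d \<gamma>"
  show "d_curve (hat_d d a) \<gamma>h" unfolding d_curve_def
  proof (intro ballI allI impI)
    fix t e :: real assume t: "t \<in> {0..1}" and e: "e > 0"
    obtain \<delta> where \<delta>: "\<delta> > 0" "\<And>s. s\<in>{0..1} \<Longrightarrow> \<bar>s - t\<bar> < \<delta> \<Longrightarrow> d (\<gamma> s) (\<gamma> t) < e"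
      using dc t e unfolding d_curve_def by blast
    show "\<exists>\<delta>>0. \<forall>s\<in>{0..1}. \<bar>s - t\<bar> < \<delta> \<longrightarrow> hat_d d a (\<gamma>h s) (\<gamma>h t) < e"
    proof (intro exI[of _ \<delta>] conjI ballI impI)
      fix s assume s: "s \<in> {0..1}" "\<bar>s - t\<bar> < \<delta>"
      have "hat_d d a (\<gamma>h s) (\<gamma>h t) \<le> d (\<gamma> s) (\<gamma> t)" using eq s t hat_le_d by simp
      then show "hat_d d a (\<gamma>h s) (\<gamma>h t) < e" using \<delta>(2)[OF s] by simp
    qed (rule \<delta>(1))
  qed
qed

lemma len_hat_le_d:
  assumes eq: "\<And>t::real. 0 \<le> t \<Longrightarrow> t \<le> 1 \<Longrightarrow> \<gamma>h t = Some (\<gamma> t)"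
    and st: "0 \<le> s" "t \<le> 1"
  shows "curve_length (hat_d d a) \<gamma>h s t \<le> curve_length d \<gamma> s t"
proof -
  have "curve_length (hat_d d a) \<gamma>h s t \<le> 1 * curve_length d \<gamma> s t"
  proof (rule curve_length_compare)
    fix u v assume "s \<le> u" "u \<le> v" "v \<le> t"
    then show "ennreal (hat_d d a (\<gamma>h u) (\<gamma>h v)) \<le> 1 * ennreal (d (\<gamma> u) (\<gamma> v))"
      using eq st hat_le_d by (auto intro: ennreal_leI)
  qed
  then show ?thesis by simp
qed

lemma rect_d_imp_hat:
  assumes eq: "\<And>t::real. 0 \<le> t \<Longrightarrow> t \<le> 1 \<Longrightarrow> \<gamma>h t = Some (\<gamma> t)"
    and rect: "d_rectifiable d \<gamma>"
  shows "d_rectifiable (hat_d d a) \<gamma>h"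
  using rect len_hat_le_d[of \<gamma>h \<gamma> 0 1, OF eq] curve_hat_iff[of \<gamma>h \<gamma>, OF eq] unfolding d_rectifiable_def
  by (auto intro: le_less_trans)

lemma len_local:
  assumes eq: "\<And>t::real. 0 \<le> t \<Longrightarrow> t \<le> 1 \<Longrightarrow> \<gamma>h t = Some (\<gamma> t)"
    and \<rho>: "0 < \<rho>" "\<rho> \<le> 1/4" and st: "0 \<le> s" "s \<le> t" "t \<le> 1"
    and near: "\<And>u. s \<le> u \<Longrightarrow> u \<le> t \<Longrightarrow> d (\<gamma> s) (\<gamma> u) < \<rho>"
  shows "ennreal (1 / (N (\<gamma> s) + 5 * \<rho>)^2) * curve_length d \<gamma> s t \<le> curve_length (hat_d d a) \<gamma>h s t"
    and "curve_length (hat_d d a) \<gamma>h s t \<le> ennreal (1 / (N (\<gamma> s) - \<rho>)^2) * curve_length d \<gamma> s t"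
proof -
  show "ennreal (1 / (N (\<gamma> s) + 5 * \<rho>)^2) * curve_length d \<gamma> s t \<le> curve_length (hat_d d a) \<gamma>h s t"
  proof (rule curve_length_compare2)
    fix u v assume uv: "s \<le> u" "u \<le> v" "v \<le> t"
    have "d (\<gamma> u) (\<gamma> v) / (N (\<gamma> s) + 5 * \<rho>)^2 \<le> hat_d d a (Some (\<gamma> u)) (Some (\<gamma> v))"
      by (rule hat_local(1)[OF \<rho>]) (use near uv in auto)
    then have "ennreal (1 / (N (\<gamma> s) + 5 * \<rho>)^2 * d (\<gamma> u) (\<gamma> v)) \<le> ennreal (hat_d d a (\<gamma>h u) (\<gamma>h v))"
      using eq uv st by (intro ennreal_leI) auto
    moreover have "ennreal (1 / (N (\<gamma> s) + 5 * \<rho>)^2 * d (\<gamma> u) (\<gamma> v)) = ennreal (1 / (N (\<gamma> s) + 5 * \<rho>)^2) * ennreal (d (\<gamma> u) (\<gamma> v))"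
      by (rule ennreal_mult) (auto simp: d_nonneg)
    ultimately show "ennreal (1 / (N (\<gamma> s) + 5 * \<rho>)^2) * ennreal (d (\<gamma> u) (\<gamma> v)) \<le> ennreal (hat_d d a (\<gamma>h u) (\<gamma>h v))"
      by simp
  qed
  show "curve_length (hat_d d a) \<gamma>h s t \<le> ennreal (1 / (N (\<gamma> s) - \<rho>)^2) * curve_length d \<gamma> s t"
  proof (rule curve_length_compare)
    fix u v assume uv: "s \<le> u" "u \<le> v" "v \<le> t"
    have "hat_d d a (Some (\<gamma> u)) (Some (\<gamma> v)) \<le> d (\<gamma> u) (\<gamma> v) / (N (\<gamma> s) - \<rho>)^2"
      by (rule hat_local(2)[OF \<rho>]) (use near uv in auto)
    then have "ennreal (hat_d d a (\<gamma>h u) (\<gamma>h v)) \<le> ennreal (1 / (N (\<gamma> s) - \<rho>)^2 * d (\<gamma> u) (\<gamma> v))"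
      using eq uv st by (intro ennreal_leI) auto
    moreover have "ennreal (1 / (N (\<gamma> s) - \<rho>)^2 * d (\<gamma> u) (\<gamma> v)) = ennreal (1 / (N (\<gamma> s) - \<rho>)^2) * ennreal (d (\<gamma> u) (\<gamma> v))"
      by (rule ennreal_mult) (auto simp: d_nonneg)
    ultimately show "ennreal (hat_d d a (\<gamma>h u) (\<gamma>h v)) \<le> ennreal (1 / (N (\<gamma> s) - \<rho>)^2) * ennreal (d (\<gamma> u) (\<gamma> v))"
      by simp
  qed
qed

lemma near_of_unif:
  assumes cur: "d_curve d \<gamma>" and \<rho>: "0 < \<rho>"
  shows "\<exists>\<delta>>0. \<forall>s t. 0 \<le> s \<longrightarrow> s \<le> t \<longrightarrow> t \<le> 1 \<longrightarrow> t - s < \<delta> \<longrightarrow>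
            (\<forall>u. s \<le> u \<longrightarrow> u \<le> t \<longrightarrow> d (\<gamma> s) (\<gamma> u) < \<rho>)"
proof -
  obtain \<delta> where \<delta>: "\<delta> > 0" "\<forall>s\<in>{0..1}. \<forall>t\<in>{0..1}. \<bar>s - t\<bar> < \<delta> \<longrightarrow> d (\<gamma> s) (\<gamma> t) < \<rho>"
    using d.unif_cont[OF cur \<rho>] by blast
  show ?thesis
  proof (intro exI[of _ \<delta>] conjI allI impI)
    fix s t u assume h: "0 \<le> s" "s \<le> t" "t \<le> 1" "t - s < \<delta>" "s \<le> u" "u \<le> t"
    then show "d (\<gamma> s) (\<gamma> u) < \<rho>" using \<delta>(2) by auto
  qed (rule \<delta>(1))
qed

lemma rect_hat_imp_d:
  assumes eq: "\<And>t::real. 0 \<le> t \<Longrightarrow> t \<le> 1 \<Longrightarrow> \<gamma>h t = Some (\<gamma> t)"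
    and rect: "d_rectifiable (hat_d d a) \<gamma>h"
  shows "d_rectifiable d \<gamma>"
proof -
  have cur: "d_curve d \<gamma>" using rect curve_hat_iff[of \<gamma>h \<gamma>, OF eq] unfolding d_rectifiable_def by simp
  have hfin: "curve_length (hat_d d a) \<gamma>h 0 1 < \<infinity>" using rect unfolding d_rectifiable_def by simp
  obtain \<delta> where \<delta>: "\<delta> > 0" "\<And>s t u. 0 \<le> s \<Longrightarrow> s \<le> t \<Longrightarrow> t \<le> 1 \<Longrightarrow> t - s < \<delta> \<Longrightarrow>
            s \<le> u \<Longrightarrow> u \<le> t \<Longrightarrow> d (\<gamma> s) (\<gamma> u) < 1/4"
    using near_of_unif[OF cur, of "1/4"] by auto
  have "curve_length d \<gamma> 0 1 < \<infinity>"
  proof (rule small_steps[where P = "\<lambda>s t. curve_length d \<gamma> s t < \<infinity>", OF \<delta>(1)])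
    fix s t assume st: "0 \<le> s" "s \<le> t" "t \<le> 1" "t - s < \<delta>"
    define c where "c = 1 / (N (\<gamma> s) + 5 * (1/4))^2"
    have c0: "c > 0" unfolding c_def using N_pos[of "\<gamma> s"] by simp
    have "ennreal c * curve_length d \<gamma> s t \<le> curve_length (hat_d d a) \<gamma>h s t"
      unfolding c_def by (rule len_local(1)[of \<gamma>h \<gamma>, OF eq _ _ st(1-3)]) (use \<delta>(2) st in auto)
    also have "\<dots> < \<infinity>" using hat.length_finite[OF hfin st(1-3)] .
    finally have "ennreal c * curve_length d \<gamma> s t < \<infinity>" .
    then have "curve_length d \<gamma> s t = 0 \<or> curve_length d \<gamma> s t < top" using c0
      by (simp add: ennreal_mult_less_top)
    then show "curve_length d \<gamma> s t < \<infinity>" by (elim disjE) simp_all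
  next
    fix s m t assume h: "0 \<le> s" "s \<le> m" "m \<le> t" "t \<le> 1" "curve_length d \<gamma> s m < \<infinity>" "curve_length d \<gamma> m t < \<infinity>"
    then show "curve_length d \<gamma> s t < \<infinity>" using d.length_add[of s m t \<gamma>] by simp
  qed auto
  then show ?thesis using cur unfolding d_rectifiable_def by simp
qed

end


lemma clmp_lip: "\<bar>clmp x - clmp y\<bar> \<le> \<bar>x - y\<bar>"
  unfolding clmp_def by (auto simp: max_def min_def abs_if)

lemma enn_lower:
  assumes "x < \<infinity>" "y < \<infinity>" "ennreal c * x \<le> y" "0 \<le> c"
  shows "c * enn2real x \<le> enn2real y"
proof -
  have "enn2real (ennreal c * x) \<le> enn2real y"
    using assms by (intro enn2real_mono) auto
  then show ?thesis using assms by (simp add: enn2real_mult)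
qed

lemma enn_upper:
  assumes "x < \<infinity>" "y \<le> ennreal c * x" "0 \<le> c"
  shows "enn2real y \<le> c * enn2real x"
proof -
  have "ennreal c * x < \<infinity>" using assms by (simp add: ennreal_mult_less_top)
  then have "enn2real y \<le> enn2real (ennreal c * x)"
    using assms by (intro enn2real_mono) auto
  then show ?thesis using assms by (simp add: enn2real_mult)
qed

locale cp = mspace d a for d :: "'a \<Rightarrow> 'a \<Rightarrow> real" and a :: 'a +
  fixes \<gamma> :: "real \<Rightarrow> 'a" and \<gamma>h :: "real \<Rightarrow> 'a option"
  assumes eq: "\<And>t::real. 0 \<le> t \<Longrightarrow> t \<le> 1 \<Longrightarrow> \<gamma>h t = Some (\<gamma> t)"
    and rect: "d_rectifiable d \<gamma>"
begin

definition W :: "real \<Rightarrow> ennreal" where "W u = ennreal (1 / (N (\<gamma> (clmp u)))^2)"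

lemma cur: "d_curve d \<gamma>" using rect unfolding d_rectifiable_def by simp
lemma fin: "curve_length d \<gamma> 0 1 < \<infinity>" using rect unfolding d_rectifiable_def by simp
lemma hrect: "d_rectifiable (hat_d d a) \<gamma>h" by (rule rect_d_imp_hat[of \<gamma>h \<gamma>, OF eq rect])
lemma hfin: "curve_length (hat_d d a) \<gamma>h 0 1 < \<infinity>" using hrect unfolding d_rectifiable_def by simp

lemma fin_d: "0 \<le> s \<Longrightarrow> s \<le> t \<Longrightarrow> t \<le> 1 \<Longrightarrow> curve_length d \<gamma> s t < \<infinity>"
  by (rule d.length_finite[OF fin])
lemma fin_h: "0 \<le> s \<Longrightarrow> s \<le> t \<Longrightarrow> t \<le> 1 \<Longrightarrow> curve_length (hat_d d a) \<gamma>h s t < \<infinity>"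
  by (rule hat.length_finite[OF hfin])

lemma Nc_cont: "continuous_on UNIV (\<lambda>t. N (\<gamma> (clmp t)))"
  unfolding continuous_on_iff
proof (intro ballI allI impI)
  fix x e :: real assume e: "0 < e"
  have cx: "clmp x \<in> {0..1}" using clmp_range[of x] by simp
  have "\<forall>e>0. \<exists>\<delta>>0. \<forall>s\<in>{0..1}. \<bar>s - clmp x\<bar> < \<delta> \<longrightarrow> d (\<gamma> s) (\<gamma> (clmp x)) < e"
    using cur cx unfolding d_curve_def by blast
  then obtain \<delta> where \<delta>: "\<delta> > 0" "\<And>s. s\<in>{0..1} \<Longrightarrow> \<bar>s - clmp x\<bar> < \<delta> \<Longrightarrow> d (\<gamma> s) (\<gamma> (clmp x)) < e"
    using e by blast
  show "\<exists>\<delta>>0. \<forall>x'\<in>UNIV. dist x' x < \<delta> \<longrightarrow> dist (N (\<gamma> (clmp x'))) (N (\<gamma> (clmp x))) < e"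
  proof (intro exI[of _ \<delta>] conjI ballI impI)
    fix x' :: real assume "dist x' x < \<delta>"
    then have "\<bar>clmp x' - clmp x\<bar> < \<delta>" using clmp_lip[of x' x] by (simp add: dist_real_def)
    then have dl: "d (\<gamma> (clmp x')) (\<gamma> (clmp x)) < e" using \<delta>(2) clmp_range[of x'] by simp
    have "\<bar>N (\<gamma> (clmp x')) - N (\<gamma> (clmp x))\<bar> \<le> d (\<gamma> (clmp x')) (\<gamma> (clmp x))"
      using N_lip[of "\<gamma> (clmp x')" "\<gamma> (clmp x)"] N_lip[of "\<gamma> (clmp x)" "\<gamma> (clmp x')"]
        d_sym[of "\<gamma> (clmp x')" "\<gamma> (clmp x)"] by (simp add: abs_le_iff)
    then show "dist (N (\<gamma> (clmp x'))) (N (\<gamma> (clmp x))) < e" using dl by (simp add: dist_real_def)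
  qed (rule \<delta>(1))
qed

lemma W_meas[measurable]: "W \<in> borel_measurable borel"
proof -
  have [measurable]: "(\<lambda>t. N (\<gamma> (clmp t))) \<in> borel_measurable borel"
    by (rule borel_measurable_continuous_onI[OF Nc_cont])
  show ?thesis unfolding W_def by measurable
qed

lemma W_meas'[measurable]: "W \<in> borel_measurable (interval_measure (arclen d \<gamma>))"
  by (subst measurable_cong_sets[OF sets_interval_measure refl]) (rule W_meas)

lemma muF_Ioc: "0 \<le> s \<Longrightarrow> s \<le> t \<Longrightarrow> t \<le> 1 \<Longrightarrow>
  emeasure (interval_measure (arclen d \<gamma>)) {s<..t} = curve_length d \<gamma> s t"
  using d.emeasure_arclen_Ioc[OF rect, of s t] by (simp add: clmp_id)

definition Iint :: "real \<Rightarrow> real \<Rightarrow> ennreal" where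
  "Iint s t = (\<integral>\<^sup>+u. W u * indicator {s<..t} u \<partial>interval_measure (arclen d \<gamma>))"

lemma Iint_bounds:
  assumes st: "0 \<le> s" "s \<le> t" "t \<le> 1" and c: "0 \<le> c1"
    and b: "\<And>u. s < u \<Longrightarrow> u \<le> t \<Longrightarrow> c1 \<le> 1 / (N (\<gamma> u))^2 \<and> 1 / (N (\<gamma> u))^2 \<le> c2"
  shows "ennreal c1 * curve_length d \<gamma> s t \<le> Iint s t"
    and "Iint s t \<le> ennreal c2 * curve_length d \<gamma> s t"
proof -
  have ind: "{s<..t} \<in> sets (interval_measure (arclen d \<gamma>))" by simp
  have cl: "\<And>u. s < u \<Longrightarrow> u \<le> t \<Longrightarrow> clmp u = u" using st by (intro clmp_id) auto
  have "ennreal c1 * curve_length d \<gamma> s t = (\<integral>\<^sup>+u. ennreal c1 * indicator {s<..t} u \<partial>interval_measure (arclen d \<gamma>))"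
    using nn_integral_cmult_indicator[OF ind, of "ennreal c1"] muF_Ioc[OF st] by simp
  also have "\<dots> \<le> Iint s t" unfolding Iint_def
  proof (rule nn_integral_mono)
    fix u show "ennreal c1 * indicator {s<..t} u \<le> W u * indicator {s<..t} u"
      using b[of u] cl[of u] unfolding W_def by (auto simp: indicator_def intro: ennreal_leI)
  qed
  finally show "ennreal c1 * curve_length d \<gamma> s t \<le> Iint s t" .
  have "Iint s t \<le> (\<integral>\<^sup>+u. ennreal c2 * indicator {s<..t} u \<partial>interval_measure (arclen d \<gamma>))"
    unfolding Iint_def
  proof (rule nn_integral_mono)
    fix u show "W u * indicator {s<..t} u \<le> ennreal c2 * indicator {s<..t} u"
      using b[of u] cl[of u] unfolding W_def by (auto simp: indicator_def intro: ennreal_leI)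
  qed
  also have "\<dots> = ennreal c2 * curve_length d \<gamma> s t"
    using nn_integral_cmult_indicator[OF ind, of "ennreal c2"] muF_Ioc[OF st] by simp
  finally show "Iint s t \<le> ennreal c2 * curve_length d \<gamma> s t" .
qed

lemma Iint_add:
  assumes "s \<le> m" "m \<le> t"
  shows "Iint s t = Iint s m + Iint m t"
proof -
  have "\<And>u. W u * indicator {s<..t} u = W u * indicator {s<..m} u + W u * indicator {m<..t} u"
    using assms by (auto simp: indicator_def)
  then have "Iint s t = (\<integral>\<^sup>+u. W u * indicator {s<..m} u + W u * indicator {m<..t} u \<partial>interval_measure (arclen d \<gamma>))"
    unfolding Iint_def by simp
  also have "\<dots> = Iint s m + Iint m t" unfolding Iint_def
    by (rule nn_integral_add) auto
  finally show ?thesis .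
qed

lemma Iint_fin:
  assumes st: "0 \<le> s" "s \<le> t" "t \<le> 1"
  shows "Iint s t < \<infinity>"
proof -
  have "Iint s t \<le> ennreal 1 * curve_length d \<gamma> s t"
  proof (rule Iint_bounds(2)[OF st, of 0])
    fix u assume "s < u" "u \<le> t"
    have "1 \<le> (N (\<gamma> u))^2" using N_ge1[of "\<gamma> u"] by (simp add: one_le_power)
    then show "0 \<le> 1 / (N (\<gamma> u))^2 \<and> 1 / (N (\<gamma> u))^2 \<le> 1" by (simp add: divide_le_eq)
  qed simp
  also have "\<dots> < \<infinity>" using fin_d[OF st] by simp
  finally show ?thesis .
qed


definition Lh where "Lh s t = enn2real (curve_length (hat_d d a) \<gamma>h s t)"
definition Ld where "Ld s t = enn2real (curve_length d \<gamma> s t)"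
definition Ir where "Ir s t = enn2real (Iint s t)"

lemma Ld_nonneg: "0 \<le> Ld s t" unfolding Ld_def by simp

lemma adds:
  assumes "0 \<le> s" "s \<le> m" "m \<le> t" "t \<le> 1"
  shows "Lh s t = Lh s m + Lh m t" "Ld s t = Ld s m + Ld m t" "Ir s t = Ir s m + Ir m t"
proof -
  show "Lh s t = Lh s m + Lh m t" unfolding Lh_def
    using hat.length_add[of s m t \<gamma>h] fin_h[of s m] fin_h[of m t] assms by (simp add: enn2real_plus)
  show "Ld s t = Ld s m + Ld m t" unfolding Ld_def
    using d.length_add[of s m t \<gamma>] fin_d[of s m] fin_d[of m t] assms by (simp add: enn2real_plus)
  show "Ir s t = Ir s m + Ir m t" unfolding Ir_def
    using Iint_add[of s m t] Iint_fin[of s m] Iint_fin[of m t] assms by (simp add: enn2real_plus)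
qed

lemma small_est:
  assumes \<rho>: "0 < \<rho>" "\<rho> \<le> 1/4" and st: "0 \<le> s" "s \<le> t" "t \<le> 1"
    and near: "\<And>u. s \<le> u \<Longrightarrow> u \<le> t \<Longrightarrow> d (\<gamma> s) (\<gamma> u) < \<rho>"
  shows "\<bar>Lh s t - Ir s t\<bar> \<le> 32 * \<rho> * Ld s t"
proof -
  define N0 where "N0 = N (\<gamma> s)"
  define c1 where "c1 = 1 / (N0 + 5 * \<rho>)^2"
  define c2 where "c2 = 1 / (N0 - \<rho>)^2"
  define c3 where "c3 = 1 / (N0 + \<rho>)^2"
  have N0: "1 \<le> N0" unfolding N0_def by (rule N_ge1)
  have pos: "0 < N0 - \<rho>" using N0 \<rho> by simp
  have c: "0 \<le> c1" "0 \<le> c2" "0 \<le> c3" unfolding c1_def c2_def c3_def by auto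
  have lh1: "c1 * Ld s t \<le> Lh s t" unfolding Ld_def Lh_def
    by (rule enn_lower[OF fin_d[OF st] fin_h[OF st] _ c(1)])
       (unfold c1_def N0_def, rule len_local(1)[of \<gamma>h \<gamma>, OF eq \<rho> st near])
  have lh2: "Lh s t \<le> c2 * Ld s t" unfolding Ld_def Lh_def
    by (rule enn_upper[OF fin_d[OF st] _ c(2)])
       (unfold c2_def N0_def, rule len_local(2)[of \<gamma>h \<gamma>, OF eq \<rho> st near])
  have bnd: "c3 \<le> 1 / (N (\<gamma> u))^2 \<and> 1 / (N (\<gamma> u))^2 \<le> c2" if u: "s < u" "u \<le> t" for u
  proof -
    have du: "d (\<gamma> s) (\<gamma> u) < \<rho>" using near u by simp
    have Nu: "N0 - \<rho> \<le> N (\<gamma> u)" "N (\<gamma> u) \<le> N0 + \<rho>"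
      using N_lip[where x="\<gamma> s" and y="\<gamma> u"] du unfolding N0_def by auto
    have "(N (\<gamma> u))^2 \<le> (N0 + \<rho>)^2" using Nu pos by (intro power_mono) auto
    then have "c3 \<le> 1 / (N (\<gamma> u))^2" unfolding c3_def using N_pos[of "\<gamma> u"] N0 \<rho>
      by (intro divide_left_mono) auto
    moreover have "(N0 - \<rho>)^2 \<le> (N (\<gamma> u))^2" using Nu pos by (intro power_mono) auto
    then have "1 / (N (\<gamma> u))^2 \<le> c2" unfolding c2_def using pos N_pos[of "\<gamma> u"]
      by (intro divide_left_mono) auto
    ultimately show ?thesis by simp
  qed
  have i1: "c3 * Ld s t \<le> Ir s t" unfolding Ld_def Ir_def
    by (rule enn_lower[OF fin_d[OF st] Iint_fin[OF st] Iint_bounds(1)[OF st c(3)] c(3)]) (rule bnd)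
  have i2: "Ir s t \<le> c2 * Ld s t" unfolding Ld_def Ir_def
    by (rule enn_upper[OF fin_d[OF st] Iint_bounds(2)[OF st c(3)] c(2)]) (rule bnd)
  have "(N0 + \<rho>)^2 \<le> (N0 + 5 * \<rho>)^2" using N0 \<rho> by (intro power_mono) auto
  then have c13: "c1 \<le> c3" unfolding c1_def c3_def using N0 \<rho>
    by (intro divide_left_mono) auto
  have "c1 * Ld s t \<le> c3 * Ld s t" using c13 Ld_nonneg by (rule mult_right_mono)
  then have "\<bar>Lh s t - Ir s t\<bar> \<le> c2 * Ld s t - c1 * Ld s t" using lh1 lh2 i1 i2 by linarith
  also have "\<dots> = (c2 - c1) * Ld s t" by (simp add: left_diff_distrib)
  also have "\<dots> \<le> 32 * \<rho> * Ld s t"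
    using num32[OF N0 \<rho>] Ld_nonneg unfolding c1_def c2_def by (intro mult_right_mono) auto
  finally show ?thesis .
qed

lemma core_real:
  assumes st: "0 \<le> s" "s \<le> t" "t \<le> 1"
  shows "Lh s t = Ir s t"
proof -
  have est: "\<bar>Lh s t - Ir s t\<bar> \<le> 32 * \<rho> * Ld s t" if \<rho>: "0 < \<rho>" "\<rho> \<le> 1/4" for \<rho>
  proof -
    obtain \<delta> where \<delta>: "\<delta> > 0" "\<And>s t u. 0 \<le> s \<Longrightarrow> s \<le> t \<Longrightarrow> t \<le> 1 \<Longrightarrow> t - s < \<delta> \<Longrightarrow>
            s \<le> u \<Longrightarrow> u \<le> t \<Longrightarrow> d (\<gamma> s) (\<gamma> u) < \<rho>"
      using near_of_unif[OF cur \<rho>(1)] by auto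
    show ?thesis
    proof (rule small_steps[where P = "\<lambda>s t. \<bar>Lh s t - Ir s t\<bar> \<le> 32 * \<rho> * Ld s t", OF \<delta>(1)])
      fix s t assume h: "0 \<le> s" "s \<le> t" "t \<le> 1" "t - s < \<delta>"
      show "\<bar>Lh s t - Ir s t\<bar> \<le> 32 * \<rho> * Ld s t"
        by (rule small_est[OF \<rho> h(1-3)]) (use \<delta>(2) h in auto)
    next
      fix s m t assume h: "0 \<le> s" "s \<le> m" "m \<le> t" "t \<le> 1"
        "\<bar>Lh s m - Ir s m\<bar> \<le> 32 * \<rho> * Ld s m" "\<bar>Lh m t - Ir m t\<bar> \<le> 32 * \<rho> * Ld m t"
      have "\<bar>Lh s t - Ir s t\<bar> = \<bar>(Lh s m - Ir s m) + (Lh m t - Ir m t)\<bar>"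
        using adds[OF h(1-4)] by simp
      also have "\<dots> \<le> \<bar>Lh s m - Ir s m\<bar> + \<bar>Lh m t - Ir m t\<bar>" by (rule abs_triangle_ineq)
      also have "\<dots> \<le> 32 * \<rho> * Ld s m + 32 * \<rho> * Ld m t" using h by simp
      also have "\<dots> = 32 * \<rho> * Ld s t" using adds[OF h(1-4)] by (simp add: algebra_simps)
      finally show "\<bar>Lh s t - Ir s t\<bar> \<le> 32 * \<rho> * Ld s t" .
    qed (use st in auto)
  qed
  show ?thesis
  proof (rule ccontr)
    assume ne: "Lh s t \<noteq> Ir s t"
    define e where "e = \<bar>Lh s t - Ir s t\<bar>"
    have e0: "0 < e" unfolding e_def using ne by simp
    define L where "L = Ld s t"
    have L0: "0 \<le> L" unfolding L_def by (rule Ld_nonneg)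
    define \<rho> where "\<rho> = min (1/4) (e / (64 * (L + 1)))"
    have \<rho>1: "0 < \<rho>" unfolding \<rho>_def using e0 L0 by auto
    have \<rho>2: "\<rho> \<le> 1/4" unfolding \<rho>_def by (rule min.cobounded1)
    note \<rho> = \<rho>1 \<rho>2
    have "32 * \<rho> * L \<le> 32 * (e / (64 * (L + 1))) * L"
        using L0 e0 unfolding \<rho>_def by (intro mult_right_mono mult_left_mono min.cobounded2) auto
    also have "\<dots> = e * (L / (2 * (L + 1)))" using L0 by (simp add: field_simps)
    also have "\<dots> < e * 1"
      using L0 e0 by (intro mult_strict_left_mono) (auto simp: field_simps)
    finally have "32 * \<rho> * L < e" by simp
    then show False using est[OF \<rho>] unfolding e_def L_def by simp
  qed
qed

lemma core_eq:
  assumes st: "0 \<le> s" "s \<le> t" "t \<le> 1"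
  shows "curve_length (hat_d d a) \<gamma>h s t = Iint s t"
proof -
  have 1: "curve_length (hat_d d a) \<gamma>h s t = ennreal (Lh s t)" unfolding Lh_def using fin_h[OF st] by simp
  have 2: "Iint s t = ennreal (Ir s t)" unfolding Ir_def using Iint_fin[OF st] by simp
  show ?thesis unfolding 1 2 core_real[OF st] ..
qed

end


context cp
begin

lemma AE_in01: "AE u in interval_measure (arclen d \<gamma>). u \<in> {0<..1}"
proof -
  have n1: "(\<Union>n::nat. {- real n<..0}) \<in> null_sets (interval_measure (arclen d \<gamma>))"
  proof (rule null_sets_UN)
    fix n :: nat
    have "emeasure (interval_measure (arclen d \<gamma>)) {- real n<..0} = curve_length d \<gamma> (clmp (- real n)) (clmp 0)"
      by (rule d.emeasure_arclen_Ioc[OF rect]) simp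
    also have "\<dots> = 0" unfolding clmp_def by (simp add: d.length_refl)
    finally show "{- real n<..0} \<in> null_sets (interval_measure (arclen d \<gamma>))" by (intro null_setsI) auto
  qed
  have n2: "(\<Union>n::nat. {1<..1 + real n}) \<in> null_sets (interval_measure (arclen d \<gamma>))"
  proof (rule null_sets_UN)
    fix n :: nat
    have "emeasure (interval_measure (arclen d \<gamma>)) {1<..1 + real n} = curve_length d \<gamma> (clmp 1) (clmp (1 + real n))"
      by (rule d.emeasure_arclen_Ioc[OF rect]) simp
    also have "\<dots> = 0" unfolding clmp_def by (simp add: d.length_refl)
    finally show "{1<..1 + real n} \<in> null_sets (interval_measure (arclen d \<gamma>))" by (intro null_setsI) auto
  qed
  have "AE u in interval_measure (arclen d \<gamma>). u \<notin> (\<Union>n::nat. {- real n<..0})" by (rule AE_not_in[OF n1])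
  moreover have "AE u in interval_measure (arclen d \<gamma>). u \<notin> (\<Union>n::nat. {1<..1 + real n})" by (rule AE_not_in[OF n2])
  ultimately show ?thesis
  proof eventually_elim
    case (elim u)
    have "0 < u"
    proof (rule ccontr)
      assume "\<not> 0 < u"
      obtain n :: nat where "- u < real n" using reals_Archimedean2 by blast
      then have "u \<in> {- real n<..0}" using \<open>\<not> 0 < u\<close> by auto
      then show False using elim(1) by blast
    qed
    moreover have "u \<le> 1"
    proof (rule ccontr)
      assume "\<not> u \<le> 1"
      obtain n :: nat where "u - 1 < real n" using reals_Archimedean2 by blast
      then have "u \<in> {1<..1 + real n}" using \<open>\<not> u \<le> 1\<close> by auto
      then show False using elim(2) by blast
    qed
    ultimately show ?case by simp
  qed
qed

lemma clmp_Ioc: "0 < u \<Longrightarrow> u \<le> 1 \<Longrightarrow> (u \<in> {s<..t}) \<longleftrightarrow> (u \<in> {clmp s<..clmp t})"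
  unfolding clmp_def by (auto simp: max_def min_def)

lemma density_Ioc:
  assumes st: "s \<le> t"
  shows "emeasure (density (interval_measure (arclen d \<gamma>)) W) {s<..t} = curve_length (hat_d d a) \<gamma>h (clmp s) (clmp t)"
proof -
  have "emeasure (density (interval_measure (arclen d \<gamma>)) W) {s<..t} = (\<integral>\<^sup>+u. W u * indicator {s<..t} u \<partial>interval_measure (arclen d \<gamma>))"
    by (rule emeasure_density) auto
  also have "\<dots> = Iint (clmp s) (clmp t)" unfolding Iint_def
  proof (rule nn_integral_cong_AE)
    show "AE u in interval_measure (arclen d \<gamma>). W u * indicator {s<..t} u = W u * indicator {clmp s<..clmp t} u"
      using AE_in01
    proof eventually_elim
      case (elim u)
      then have "u \<in> {s<..t} \<longleftrightarrow> u \<in> {clmp s<..clmp t}" by (intro clmp_Ioc) auto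
      then show ?case unfolding indicator_def by simp
    qed
  qed
  also have "\<dots> = curve_length (hat_d d a) \<gamma>h (clmp s) (clmp t)"
    using clmp_range[of s] clmp_range[of t] clmp_mono[OF st] by (intro core_eq[symmetric]) auto
  finally show ?thesis .
qed

lemma interval_eq: "interval_measure (arclen (hat_d d a) \<gamma>h) = density (interval_measure (arclen d \<gamma>)) W"
proof (rule measure_eqI_generator_eq[where E = "range (\<lambda>(a, b). {a<..b::real})" and \<Omega> = UNIV
      and A = "\<lambda>i. {- real i<..real i}"])
  show "Int_stable (range (\<lambda>(a, b). {a<..b::real}))"
  proof (rule Int_stableI)
    fix X Y assume "X \<in> range (\<lambda>(a, b). {a<..b::real})" "Y \<in> range (\<lambda>(a, b). {a<..b::real})"
    then obtain a b c e where "X = {a<..b}" "Y = {c<..e}" by auto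
    then have "X \<inter> Y = (\<lambda>(a, b). {a<..b::real}) (max a c, min b e)" by auto
    then show "X \<inter> Y \<in> range (\<lambda>(a, b). {a<..b::real})" by blast
  qed
  show "range (\<lambda>(a, b). {a<..b::real}) \<subseteq> Pow UNIV" by simp
  have sb: "sets borel = sigma_sets UNIV (range (\<lambda>(a, b). {a<..b::real}))"
    by (subst borel_sigma_sets_Ioc) (simp add: sets_measure_of)
  show "sets (interval_measure (arclen (hat_d d a) \<gamma>h)) = sigma_sets UNIV (range (\<lambda>(a, b). {a<..b::real}))"
    using sb by simp
  show "sets (density (interval_measure (arclen d \<gamma>)) W) = sigma_sets UNIV (range (\<lambda>(a, b). {a<..b::real}))"
    using sb by simp
  show "range (\<lambda>i. {- real i<..real i}) \<subseteq> range (\<lambda>(a, b). {a<..b::real})"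
    by (auto intro!: image_eqI[where x="(- real i, real i)" for i])
  show "(\<Union>i. {- real i<..real i}) = UNIV"
  proof (intro set_eqI iffI)
    fix u :: real
    obtain n :: nat where "\<bar>u\<bar> < real n" using reals_Archimedean2 by blast
    then show "u \<in> (\<Union>i. {- real i<..real i})" by (auto intro!: exI[of _ n])
  qed auto
  fix i :: nat
  show "emeasure (interval_measure (arclen (hat_d d a) \<gamma>h)) {- real i<..real i} \<noteq> \<infinity>"
    using hat.emeasure_arclen_Ioc[OF hrect, of "- real i" "real i"]
      fin_h[of "clmp (- real i)" "clmp (real i)"] clmp_range clmp_mono[of "- real i" "real i"]
    by auto
next
  fix X assume "X \<in> range (\<lambda>(a, b). {a<..b::real})"
  then obtain s t where X: "X = {s<..t}" by auto
  show "emeasure (interval_measure (arclen (hat_d d a) \<gamma>h)) X = emeasure (density (interval_measure (arclen d \<gamma>)) W) X"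
  proof (cases "s \<le> t")
    case True
    then show ?thesis unfolding X using hat.emeasure_arclen_Ioc[OF hrect True] density_Ioc[OF True] by simp
  next
    case False
    then show ?thesis unfolding X by simp
  qed
qed

end


lemma nn_integral_le_via_meas:
  assumes "\<And>g. g \<in> borel_measurable M \<Longrightarrow> g \<le> f \<Longrightarrow> integral\<^sup>N M g \<le> X"
  shows "integral\<^sup>N M f \<le> X"
  unfolding nn_integral_def
proof (rule SUP_least)
  fix g assume g: "g \<in> {g. simple_function M g \<and> g \<le> f}"
  then have "integral\<^sup>S M g = integral\<^sup>N M g" by (simp add: nn_integral_eq_simple_integral)
  also have "\<dots> \<le> X" using assms g by (auto intro: borel_measurable_simple_function)
  finally show "integral\<^sup>S M g \<le> X" .
qed

lemma nn_integral_cmult_ge: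
  assumes "0 \<le> c0"
  shows "ennreal c0 * integral\<^sup>N M F \<le> (\<integral>\<^sup>+x. ennreal c0 * F x \<partial>M)"
  unfolding nn_integral_def[of M F] SUP_mult_left_ennreal
proof (rule SUP_least)
  fix g assume g: "g \<in> {g. simple_function M g \<and> g \<le> F}"
  then have sf: "simple_function M (\<lambda>x. ennreal c0 * g x)" by auto
  have "ennreal c0 * integral\<^sup>S M g = integral\<^sup>S M (\<lambda>x. ennreal c0 * g x)"
    using g by simp
  also have "\<dots> = (\<integral>\<^sup>+x. ennreal c0 * g x \<partial>M)" using sf by (simp add: nn_integral_eq_simple_integral)
  also have "\<dots> \<le> (\<integral>\<^sup>+x. ennreal c0 * F x \<partial>M)"
    using g by (intro nn_integral_mono mult_left_mono) (auto simp: le_fun_def)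
  finally show "ennreal c0 * integral\<^sup>S M g \<le> (\<integral>\<^sup>+x. ennreal c0 * F x \<partial>M)" .
qed

lemma density_general:
  fixes c :: "'b \<Rightarrow> real"
  assumes c: "c \<in> borel_measurable M" and pos: "\<And>x. 0 < c x"
  shows "integral\<^sup>N (density M (\<lambda>x. ennreal (c x))) f = (\<integral>\<^sup>+x. ennreal (c x) * f x \<partial>M)"
proof (rule antisym)
  show "integral\<^sup>N (density M (\<lambda>x. ennreal (c x))) f \<le> (\<integral>\<^sup>+x. ennreal (c x) * f x \<partial>M)"
  proof (rule nn_integral_le_via_meas)
    fix g assume g: "g \<in> borel_measurable (density M (\<lambda>x. ennreal (c x)))" "g \<le> f"
    have gm: "g \<in> borel_measurable M" using g(1) by simp
    have "integral\<^sup>N (density M (\<lambda>x. ennreal (c x))) g = (\<integral>\<^sup>+x. ennreal (c x) * g x \<partial>M)"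
      using gm c by (intro nn_integral_density) auto
    also have "\<dots> \<le> (\<integral>\<^sup>+x. ennreal (c x) * f x \<partial>M)"
      using g(2) by (intro nn_integral_mono mult_left_mono) (auto simp: le_fun_def)
    finally show "integral\<^sup>N (density M (\<lambda>x. ennreal (c x))) g \<le> (\<integral>\<^sup>+x. ennreal (c x) * f x \<partial>M)" .
  qed
  show "(\<integral>\<^sup>+x. ennreal (c x) * f x \<partial>M) \<le> integral\<^sup>N (density M (\<lambda>x. ennreal (c x))) f"
  proof (rule nn_integral_le_via_meas)
    fix h assume h: "h \<in> borel_measurable M" "h \<le> (\<lambda>x. ennreal (c x) * f x)"
    define g where "g x = ennreal (1 / c x) * h x" for x
    have gm: "g \<in> borel_measurable M" unfolding g_def using h(1) c by measurable
    have one: "ennreal (c x) * ennreal (1 / c x) = 1" for x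
      using pos[of x] by (simp add: ennreal_mult[symmetric] less_imp_le)
    have hg: "h x = ennreal (c x) * g x" for x
      unfolding g_def by (simp add: mult.assoc[symmetric] one)
    have gf: "g x \<le> f x" for x
    proof -
      have "g x \<le> ennreal (1 / c x) * (ennreal (c x) * f x)"
        unfolding g_def using h(2) by (intro mult_left_mono) (auto simp: le_fun_def)
      also have "\<dots> = f x" by (simp add: mult.assoc[symmetric] one mult.commute[of "ennreal (1 / c x)"])
      finally show ?thesis .
    qed
    have "integral\<^sup>N M h = (\<integral>\<^sup>+x. ennreal (c x) * g x \<partial>M)" by (rule nn_integral_cong) (rule hg)
    also have "\<dots> = integral\<^sup>N (density M (\<lambda>x. ennreal (c x))) g"
      using gm c by (intro nn_integral_density[symmetric]) auto
    also have "\<dots> \<le> integral\<^sup>N (density M (\<lambda>x. ennreal (c x))) f"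
      using gf by (intro nn_integral_mono) auto
    finally show "integral\<^sup>N M h \<le> integral\<^sup>N (density M (\<lambda>x. ennreal (c x))) f" .
  qed
qed

context cp
begin

lemma line_int_hat:
  "line_int (hat_d d a) f \<gamma>h =
     (\<integral>\<^sup>+t. W t * (f (Some (\<gamma> t)) * indicator {0..1} t) \<partial>interval_measure (arclen d \<gamma>))"
proof -
  define c where "c t = 1 / (N (\<gamma> (clmp t)))^2" for t
  have Wc: "W = (\<lambda>t. ennreal (c t))" unfolding W_def c_def by auto
  have [measurable]: "(\<lambda>t. N (\<gamma> (clmp t))) \<in> borel_measurable borel"
    by (rule borel_measurable_continuous_onI[OF Nc_cont])
  have cm: "c \<in> borel_measurable (interval_measure (arclen d \<gamma>))"
    unfolding c_def by (subst measurable_cong_sets[OF sets_interval_measure refl]) measurable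
  have cpos: "0 < c t" for t unfolding c_def using N_pos[of "\<gamma> (clmp t)"] by simp
  have "line_int (hat_d d a) f \<gamma>h = integral\<^sup>N (density (interval_measure (arclen d \<gamma>)) (\<lambda>t. ennreal (c t)))
            (\<lambda>t. f (\<gamma>h t) * indicator {0..1} t)"
    unfolding line_int_def interval_eq Wc ..
  also have "\<dots> = (\<integral>\<^sup>+t. ennreal (c t) * (f (\<gamma>h t) * indicator {0..1} t) \<partial>interval_measure (arclen d \<gamma>))"
    by (rule density_general[OF cm cpos])
  also have "\<dots> = (\<integral>\<^sup>+t. W t * (f (Some (\<gamma> t)) * indicator {0..1} t) \<partial>interval_measure (arclen d \<gamma>))"
    unfolding Wc by (intro nn_integral_cong) (auto simp: indicator_def eq)
  finally show ?thesis .
qed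

lemma W_01: "0 \<le> t \<Longrightarrow> t \<le> 1 \<Longrightarrow> W t = ennreal (1 / (N (\<gamma> t))^2)"
  unfolding W_def by (simp add: clmp_id)

lemma line_int_ghat:
  "line_int (hat_d d a) (\<lambda>z. case z of Some x \<Rightarrow> g x * ennreal ((N x)\<^sup>2) | None \<Rightarrow> 0) \<gamma>h = line_int d g \<gamma>"
proof -
  have "W t * ((g (\<gamma> t) * ennreal ((N (\<gamma> t))\<^sup>2)) * indicator {0..1} t) = g (\<gamma> t) * indicator {0..1} t" for t
  proof (cases "t \<in> {0..1}")
    case True
    have "ennreal (1 / (N (\<gamma> t))^2) * ennreal ((N (\<gamma> t))\<^sup>2) = 1"
      using N_pos[of "\<gamma> t"] by (simp add: ennreal_mult[symmetric])
    then show ?thesis using True W_01[of t]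
      by (simp add: mult.assoc mult.commute[of "ennreal (1 / (N (\<gamma> t))^2)"] mult.left_commute[of "ennreal (1 / (N (\<gamma> t))^2)"])
  qed simp
  then have "line_int (hat_d d a) (\<lambda>z. case z of Some x \<Rightarrow> g x * ennreal ((N x)\<^sup>2) | None \<Rightarrow> 0) \<gamma>h
     = (\<integral>\<^sup>+t. g (\<gamma> t) * indicator {0..1} t \<partial>interval_measure (arclen d \<gamma>))"
    by (subst line_int_hat) simp
  then show ?thesis by (simp add: line_int_def)
qed

lemma curve_bound: "\<exists>K. \<forall>t. 0 \<le> t \<and> t \<le> 1 \<longrightarrow> N (\<gamma> t) \<le> K"
proof -
  define K where "K = N (\<gamma> 0) + enn2real (curve_length d \<gamma> 0 1)"
  have "N (\<gamma> t) \<le> K" if t: "0 \<le> t" "t \<le> 1" for t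
  proof -
    have "ennreal (d (\<gamma> 0) (\<gamma> t)) \<le> curve_length d \<gamma> 0 t" by (rule d.dist_le_length) (use t in simp)
    also have "\<dots> \<le> curve_length d \<gamma> 0 1" by (rule d.length_mono) (use t in auto)
    finally have le: "ennreal (d (\<gamma> 0) (\<gamma> t)) \<le> curve_length d \<gamma> 0 1" .
    have "d (\<gamma> 0) (\<gamma> t) \<le> enn2real (curve_length d \<gamma> 0 1)"
    proof -
      have "enn2real (ennreal (d (\<gamma> 0) (\<gamma> t))) \<le> enn2real (curve_length d \<gamma> 0 1)"
        using le fin by (intro enn2real_mono) auto
      then show ?thesis using d_nonneg[of "\<gamma> 0" "\<gamma> t"] by simp
    qed
    then show ?thesis unfolding K_def using N_lip[where x="\<gamma> 0" and y="\<gamma> t"] by simp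
  qed
  then show ?thesis by blast
qed

lemma line_int_weight_inf:
  assumes inf: "line_int d F \<gamma> = \<infinity>"
  shows "line_int d (\<lambda>x. F x * ennreal (N x powr e)) \<gamma> = \<infinity>"
proof -
  obtain K where K: "\<And>t. 0 \<le> t \<Longrightarrow> t \<le> 1 \<Longrightarrow> N (\<gamma> t) \<le> K" using curve_bound by blast
  have K1: "1 \<le> K" using K[of 0] N_ge1[of "\<gamma> 0"] by simp
  define c0 where "c0 = K powr (- \<bar>e\<bar>)"
  have c0: "0 < c0" unfolding c0_def using K1 by simp
  have low: "c0 \<le> N (\<gamma> t) powr e" if t: "0 \<le> t" "t \<le> 1" for t
  proof -
    have N1: "1 \<le> N (\<gamma> t)" by (rule N_ge1)
    have "c0 \<le> N (\<gamma> t) powr (- \<bar>e\<bar>)" unfolding c0_def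
      using K[OF t] N1 by (intro powr_mono2') auto
    also have "\<dots> \<le> N (\<gamma> t) powr e" using N1 by (intro powr_mono) auto
    finally show ?thesis .
  qed
  have "\<infinity> = ennreal c0 * line_int d F \<gamma>" using inf c0 by (simp add: ennreal_mult_top)
  also have "\<dots> \<le> (\<integral>\<^sup>+t. ennreal c0 * (F (\<gamma> t) * indicator {0..1} t) \<partial>interval_measure (arclen d \<gamma>))"
    unfolding line_int_def by (rule nn_integral_cmult_ge) (use c0 in simp)
  also have "\<dots> \<le> line_int d (\<lambda>x. F x * ennreal (N x powr e)) \<gamma>"
    unfolding line_int_def
  proof (rule nn_integral_mono)
    fix t
    show "ennreal c0 * (F (\<gamma> t) * indicator {0..1} t) \<le> F (\<gamma> t) * ennreal (N (\<gamma> t) powr e) * indicator {0..1} t"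
    proof (cases "t \<in> {0..1}")
      case True
      then have "ennreal c0 \<le> ennreal (N (\<gamma> t) powr e)" using low[of t] by (intro ennreal_leI) auto
      then have "ennreal c0 * F (\<gamma> t) \<le> ennreal (N (\<gamma> t) powr e) * F (\<gamma> t)" by (rule mult_right_mono) simp
      then show ?thesis using True by (simp add: mult.commute)
    qed simp
  qed
  finally show ?thesis by (simp add: top_unique)
qed

end


lemma space_d_borel[simp]: "space (d_borel dd) = UNIV"
  unfolding d_borel_def by (simp add: space_measure_of_conv)

lemma sets_d_borel: "sets (d_borel dd) = sigma_sets UNIV {U. d_open dd U}"
  unfolding d_borel_def by (simp add: sets_measure_of_conv)

lemma d_open_in_sets: "d_open dd U \<Longrightarrow> U \<in> sets (d_borel dd)"
  unfolding sets_d_borel by auto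

lemma measurable_into_d_borel:
  assumes "\<And>U. d_open dd U \<Longrightarrow> f -` U \<inter> space M \<in> sets M"
  shows "f \<in> measurable M (d_borel dd)"
  unfolding d_borel_def by (rule measurable_measure_of) (use assms in auto)

context mspace
begin

lemma dist_a_meas[measurable]: "(\<lambda>x. d x a) \<in> borel_measurable (d_borel d)"
  unfolding borel_measurable_iff_less
proof
  fix c :: real
  have "d_open d {w. d w a < c}" unfolding d_open_def dball_def
  proof (intro ballI)
    fix x assume x: "x \<in> {w. d w a < c}"
    show "\<exists>r>0. {y. d x y < r} \<subseteq> {w. d w a < c}"
    proof (intro exI[of _ "c - d x a"] conjI subsetI)
      show "0 < c - d x a" using x by simp
    next
      fix y assume "y \<in> {y. d x y < c - d x a}"
      then show "y \<in> {w. d w a < c}" using d_tri[where x=y and y=x and z=a] d_sym[of x y] by simp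
    qed
  qed
  then show "{w \<in> space (d_borel d). d w a < c} \<in> sets (d_borel d)" using d_open_in_sets by simp
qed

lemma N_meas[measurable]: "N \<in> borel_measurable (d_borel d)"
  unfolding N_def[abs_def] by measurable

lemma Some_meas: "Some \<in> measurable (d_borel d) (d_borel (hat_d d a))"
proof (rule measurable_into_d_borel)
  fix U assume U: "d_open (hat_d d a) U"
  have "d_open d (Some -` U)" unfolding d_open_def dball_def
  proof (intro ballI)
    fix x assume "x \<in> Some -` U"
    then obtain r where r: "r > 0" "{z. hat_d d a (Some x) z < r} \<subseteq> U"
      using U unfolding d_open_def dball_def by auto
    show "\<exists>r>0. {y. d x y < r} \<subseteq> Some -` U"
    proof (intro exI[of _ r] conjI subsetI)
      fix y assume "y \<in> {y. d x y < r}"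
      then have "hat_d d a (Some x) (Some y) < r" using hat_le_d[of x y] by simp
      then show "y \<in> Some -` U" using r by auto
    qed (rule r(1))
  qed
  then show "Some -` U \<inter> space (d_borel d) \<in> sets (d_borel d)" using d_open_in_sets by simp
qed

definition bk :: "'a option \<Rightarrow> 'a" where "bk z = (case z of Some x \<Rightarrow> x | None \<Rightarrow> a)"

lemma Some_image_open: "d_open d V \<Longrightarrow> d_open (hat_d d a) (Some ` V)"
  unfolding d_open_def dball_def
proof (intro ballI)
  fix z assume V: "\<forall>x\<in>V. \<exists>r>0. {y. d x y < r} \<subseteq> V" and z: "z \<in> Some ` V"
  then obtain x where x: "z = Some x" "x \<in> V" by auto
  obtain r where r: "r > 0" "{y. d x y < r} \<subseteq> V" using V x(2) by auto
  obtain \<epsilon> where \<epsilon>: "\<epsilon> > 0" "\<forall>z. hat_d d a (Some x) z < \<epsilon> \<longrightarrow> (\<exists>y. z = Some y \<and> d x y < r)"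
    using hat_ball_small[OF r(1), of x] by auto
  show "\<exists>r>0. {y. hat_d d a z y < r} \<subseteq> Some ` V"
  proof (intro exI[of _ \<epsilon>] conjI subsetI)
    fix w assume "w \<in> {y. hat_d d a z y < \<epsilon>}"
    then obtain y where "w = Some y" "d x y < r" using \<epsilon>(2) x(1) by auto
    then show "w \<in> Some ` V" using r(2) by auto
  qed (rule \<epsilon>(1))
qed

lemma None_sets: "{None} \<in> sets (d_borel (hat_d d a))"
proof -
  have "d_open d UNIV" unfolding d_open_def dball_def by (auto intro: exI[of _ 1])
  then have "Some ` UNIV \<in> sets (d_borel (hat_d d a))" by (intro d_open_in_sets Some_image_open)
  then have "UNIV - Some ` UNIV \<in> sets (d_borel (hat_d d a))"
    using sets.compl_sets[of "Some ` UNIV" "d_borel (hat_d d a)"] by simp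
  moreover have "UNIV - Some ` (UNIV::'a set) = {None}"
  proof (rule set_eqI)
    fix z :: "'a option" show "z \<in> UNIV - Some ` UNIV \<longleftrightarrow> z \<in> {None}" by (cases z) auto
  qed
  ultimately show ?thesis by simp
qed

lemma bk_meas: "bk \<in> measurable (d_borel (hat_d d a)) (d_borel d)"
proof (rule measurable_into_d_borel)
  fix V assume V: "d_open d V"
  have S: "Some ` V \<in> sets (d_borel (hat_d d a))" by (intro d_open_in_sets Some_image_open V)
  have "bk -` V = Some ` V \<union> (if a \<in> V then {None} else {})"
    unfolding bk_def by (auto split: option.splits)
  moreover have "Some ` V \<union> (if a \<in> V then {None} else {}) \<in> sets (d_borel (hat_d d a))"
  proof (cases "a \<in> V")
    case True
    then show ?thesis using sets.Un[OF S None_sets] by (simp only: if_True)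
  qed (use S in simp)
  ultimately show "bk -` V \<inter> space (d_borel (hat_d d a)) \<in> sets (d_borel (hat_d d a))"
    by simp
qed

lemma hatfun_meas:
  assumes h: "h \<in> borel_measurable (d_borel d)"
  shows "(\<lambda>z. case z of Some x \<Rightarrow> h x | None \<Rightarrow> (0::ennreal)) \<in> borel_measurable (d_borel (hat_d d a))"
proof -
  have hb: "(\<lambda>z. h (bk z)) \<in> borel_measurable (d_borel (hat_d d a))"
    by (rule measurable_compose[OF bk_meas h])
  have "(\<lambda>z. indicator (UNIV - {None}) z * h (bk z)) \<in> borel_measurable (d_borel (hat_d d a))"
  proof (intro borel_measurable_times_ennreal borel_measurable_indicator hb)
    show "UNIV - {None} \<in> sets (d_borel (hat_d d a))"
      using sets.compl_sets[OF None_sets] by simp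
  qed
  moreover have "(\<lambda>z. indicator (UNIV - {None}) z * h (bk z)) = (\<lambda>z. case z of Some x \<Rightarrow> h x | None \<Rightarrow> 0)"
    by (auto simp: bk_def indicator_def split: option.splits)
  ultimately show ?thesis by simp
qed

lemma backfun_meas:
  assumes F: "F \<in> borel_measurable (d_borel (hat_d d a))"
  shows "(\<lambda>x. F (Some x)) \<in> borel_measurable (d_borel d)"
  by (rule measurable_compose[OF Some_meas F])

end


locale msm = mspace d a for d :: "'a \<Rightarrow> 'a \<Rightarrow> real" and a :: 'a +
  fixes \<mu> :: "'a measure" and q :: real
  assumes space_mu: "space \<mu> = UNIV" and sets_mu: "sets (d_borel d) \<subseteq> sets \<mu>"
begin

lemma to_mu_meas: "f \<in> borel_measurable (d_borel d) \<Longrightarrow> f \<in> borel_measurable \<mu>"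
  using measurable_mono[of borel borel "d_borel d" \<mu>] sets_mu space_mu by auto

definition Sig :: "'a option set set" where "Sig = {A. Some -` A \<in> sets \<mu>}"

lemma sa: "sigma_algebra UNIV Sig"
  unfolding sigma_algebra_iff2
proof (intro conjI ballI allI impI)
  show "Sig \<subseteq> Pow UNIV" by simp
  show "{} \<in> Sig" unfolding Sig_def by simp
next
  fix s assume "s \<in> Sig"
  then have "space \<mu> - Some -` s \<in> sets \<mu>" unfolding Sig_def by auto
  moreover have "Some -` (UNIV - s) = space \<mu> - Some -` s" using space_mu by auto
  ultimately show "UNIV - s \<in> Sig" unfolding Sig_def by simp
next
  fix A :: "nat \<Rightarrow> 'a option set" assume "range A \<subseteq> Sig"
  then have "(\<Union>i. Some -` A i) \<in> sets \<mu>" unfolding Sig_def by auto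
  moreover have "Some -` (\<Union>i. A i) = (\<Union>i. Some -` A i)" by auto
  ultimately show "(\<Union>i. A i) \<in> Sig" unfolding Sig_def by simp
qed

definition Hs :: "'a option measure" where "Hs = measure_of UNIV Sig (\<lambda>_. 0)"

lemma sets_Hs: "sets Hs = Sig"
  unfolding Hs_def using sa by (simp add: sets_measure_of_conv sigma_algebra.sigma_sets_eq)
lemma space_Hs: "space Hs = UNIV"
  unfolding Hs_def by (simp add: space_measure_of_conv)

definition w :: "'a \<Rightarrow> ennreal" where "w x = ennreal (1 / (1 + d x a) powr q)"

lemma w_meas: "w \<in> borel_measurable \<mu>"
  unfolding w_def by (rule to_mu_meas) measurable

lemma Some_meas_Hs: "Some \<in> measurable (density \<mu> w) Hs"
  unfolding Hs_def
  by (rule measurable_measure_of) (auto simp: Sig_def space_mu)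

lemma hat_mu_eq: "hat_mu d \<mu> a q = distr (density \<mu> w) Hs Some"
proof -
  let ?D = "distr (density \<mu> w) Hs Some"
  have "hat_mu d \<mu> a q = measure_of UNIV Sig (emeasure ?D)"
    unfolding hat_mu_def Sig_def[symmetric]
  proof (rule measure_of_eq)
    show "Sig \<subseteq> Pow UNIV" by simp
  next
    fix A assume "A \<in> sigma_sets UNIV Sig"
    then have A: "A \<in> Sig" using sigma_algebra.sigma_sets_eq[OF sa] by simp
    have "emeasure ?D A = emeasure (density \<mu> w) (Some -` A \<inter> space (density \<mu> w))"
      by (rule emeasure_distr[OF Some_meas_Hs]) (use A sets_Hs in simp)
    also have "\<dots> = (\<integral>\<^sup>+x. w x * indicator (Some -` A) x \<partial>\<mu>)"
      using A space_mu w_meas unfolding Sig_def by (simp add: emeasure_density)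
    finally show "(\<integral>\<^sup>+x\<in>Some -` A. ennreal (1 / (1 + d x a) powr q) \<partial>\<mu>) = emeasure ?D A"
      unfolding w_def by simp
  qed
  also have "\<dots> = measure_of (space ?D) (sets ?D) (emeasure ?D)"
    using sets_Hs space_Hs by simp
  also have "\<dots> = ?D" by (rule measure_of_of_measure)
  finally show ?thesis .
qed

lemma hat_borel_Sig: "sets (d_borel (hat_d d a)) \<subseteq> Sig"
proof
  fix B assume "B \<in> sets (d_borel (hat_d d a))"
  then have "Some -` B \<inter> space (d_borel d) \<in> sets (d_borel d)"
    using Some_meas unfolding measurable_def by auto
  then show "B \<in> Sig" unfolding Sig_def using sets_mu by auto
qed

lemma hat_mu_int:
  assumes F: "F \<in> borel_measurable (d_borel (hat_d d a))"
  shows "integral\<^sup>N (hat_mu d \<mu> a q) F = (\<integral>\<^sup>+x. w x * F (Some x) \<partial>\<mu>)"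
proof -
  have FH: "F \<in> borel_measurable Hs"
    using measurable_mono[of borel borel "d_borel (hat_d d a)" Hs] F hat_borel_Sig sets_Hs space_Hs by auto
  have FS: "(\<lambda>x. F (Some x)) \<in> borel_measurable \<mu>" by (rule to_mu_meas[OF backfun_meas[OF F]])
  have "integral\<^sup>N (hat_mu d \<mu> a q) F = (\<integral>\<^sup>+x. F (Some x) \<partial>density \<mu> w)"
    unfolding hat_mu_eq by (rule nn_integral_distr[OF Some_meas_Hs]) (use FH in simp)
  also have "\<dots> = (\<integral>\<^sup>+x. w x * F (Some x) \<partial>\<mu>)"
    by (rule nn_integral_density) (use w_meas FS in auto)
  finally show ?thesis .
qed

end


lemma epowr_mult:
  assumes c: "0 < c" and p: "0 < p"
  shows "epowr (x * ennreal c) p = epowr x p * ennreal (c powr p)"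
proof (cases "x = \<infinity>")
  case True
  have "x * ennreal c = \<infinity>" using True c by (simp add: ennreal_mult_eq_top_iff)
  moreover have "\<infinity> * ennreal (c powr p) = \<infinity>" using c by (simp add: ennreal_mult_eq_top_iff)
  ultimately show ?thesis using True unfolding epowr_def by simp
next
  case False
  define r where "r = enn2real x"
  have r: "x = ennreal r" "0 \<le> r" unfolding r_def using False by (auto simp: less_top)
  have xc: "x * ennreal c = ennreal (r * c)" using r c by (simp add: ennreal_mult)
  have "epowr (x * ennreal c) p = ennreal ((r * c) powr p)"
    unfolding epowr_def xc using r c by simp
  also have "\<dots> = ennreal (r powr p) * ennreal (c powr p)"
    using r c by (simp add: powr_mult ennreal_mult)
  also have "\<dots> = epowr x p * ennreal (c powr p)" unfolding epowr_def using r by simp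
  finally show ?thesis .
qed

lemma epowr_meas[measurable]:
  assumes [measurable]: "f \<in> borel_measurable M"
  shows "(\<lambda>z. epowr (f z) p) \<in> borel_measurable M"
  unfolding epowr_def by measurable

context msm
begin

lemma space_hat_mu: "space (hat_mu d \<mu> a q) = UNIV"
  unfolding hat_mu_eq by (simp add: space_Hs)

lemma sets_hat_mu: "sets (hat_mu d \<mu> a q) = Sig"
  unfolding hat_mu_eq by (simp add: sets_Hs)

lemma ghat_meas:
  assumes E: "E \<in> sets \<mu>" and g: "g \<in> borel_measurable (restrict_space \<mu> E)"
  shows "(\<lambda>z. case z of Some x \<Rightarrow> g x * ennreal ((1 + d x a)\<^sup>2) | None \<Rightarrow> 0)
           \<in> borel_measurable (restrict_space (hat_mu d \<mu> a q) (Some ` E))"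
proof -
  define g' where "g' x = g x * ennreal ((1 + d x a)\<^sup>2)" for x
  have dm: "(\<lambda>x. d x a) \<in> borel_measurable (restrict_space \<mu> E)"
    by (rule measurable_restrict_space1[OF to_mu_meas[OF dist_a_meas]])
  have g'm: "g' \<in> borel_measurable (restrict_space \<mu> E)"
    unfolding g'_def using g dm by measurable
  have spE: "space (restrict_space \<mu> E) = E" using E by simp
  show ?thesis unfolding measurable_def
  proof (intro CollectI conjI ballI)
    show "(\<lambda>z. case z of Some x \<Rightarrow> g x * ennreal ((1 + d x a)\<^sup>2) | None \<Rightarrow> 0)
        \<in> space (restrict_space (hat_mu d \<mu> a q) (Some ` E)) \<rightarrow> space borel" by simp
  next
    fix B :: "ennreal set" assume B: "B \<in> sets borel"
    define X where "X = g' -` B \<inter> E"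
    have "X \<in> sets (restrict_space \<mu> E)" unfolding X_def using g'm B spE unfolding measurable_def by auto
    then obtain S where S: "S \<in> sets \<mu>" "X = E \<inter> S" unfolding sets_restrict_space by auto
    have Xs: "X \<in> sets \<mu>" using S E by auto
    have pre: "(\<lambda>z. case z of Some x \<Rightarrow> g x * ennreal ((1 + d x a)\<^sup>2) | None \<Rightarrow> 0) -` B
        \<inter> space (restrict_space (hat_mu d \<mu> a q) (Some ` E)) = Some ` E \<inter> Some ` X"
      unfolding space_restrict_space space_hat_mu X_def g'_def by auto
    have "Some ` X \<in> Sig" unfolding Sig_def using Xs by (simp add: inj_vimage_image_eq)
    then show "(\<lambda>z. case z of Some x \<Rightarrow> g x * ennreal ((1 + d x a)\<^sup>2) | None \<Rightarrow> 0) -` B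
        \<inter> space (restrict_space (hat_mu d \<mu> a q) (Some ` E)) \<in> sets (restrict_space (hat_mu d \<mu> a q) (Some ` E))"
      unfolding pre sets_restrict_space sets_hat_mu by auto
  qed
qed

end


context cp
begin

lemma line_int_hat_gen:
  "line_int (hat_d d a) f \<gamma>h = line_int d (\<lambda>x. f (Some x) * ennreal (1 / (N x)^2)) \<gamma>"
proof -
  have "line_int (hat_d d a) f \<gamma>h =
     (\<integral>\<^sup>+t. W t * (f (Some (\<gamma> t)) * indicator {0..1} t) \<partial>interval_measure (arclen d \<gamma>))"
    by (rule line_int_hat)
  also have "\<dots> = line_int d (\<lambda>x. f (Some x) * ennreal (1 / (N x)^2)) \<gamma>"
    unfolding line_int_def
  proof (rule nn_integral_cong)
    fix t
    show "W t * (f (Some (\<gamma> t)) * indicator {0..1} t) = f (Some (\<gamma> t)) * ennreal (1 / (N (\<gamma> t))^2) * indicator {0..1} t"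
    proof (cases "t \<in> {0..1}")
      case True
      then show ?thesis using W_01[of t] by (simp add: mult.commute)
    qed simp
  qed
  finally show ?thesis .
qed

end

context mspace
begin

lemma powr_shift: "ennreal (N x powr e1) * ennreal (1 / (N x)^2) = ennreal (N x powr (e1 - 2))"
proof -
  have Np: "0 < N x" by (rule N_pos)
  have "N x powr e1 * (1 / (N x)^2) = N x powr e1 / N x powr 2"
    using Np by (simp add: powr_numeral)
  also have "\<dots> = N x powr (e1 - 2)" by (simp add: powr_diff)
  finally show ?thesis using Np by (simp add: ennreal_mult[symmetric])
qed

end

theorem corollary6p2:
  fixes d :: "'a \<Rightarrow> 'a \<Rightarrow> real" and \<mu> :: "'a measure" and a :: 'a
    and p s Cs q :: real
    and E :: "'a set" and u :: "'a \<Rightarrow> ereal" and g :: "'a \<Rightarrow> ennreal"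
  assumes p: "1 \<le> p"
    and metric: "metric_on d" and complete: "metric_complete d"
    and unbounded: "unbounded_metric d"
    and meas: "good_borel_measure d \<mu>"
    and doubling: "doubling d \<mu>" and PI: "poincare d \<mu> p"
    and s: "0 < s" and Cs: "0 < Cs" and growth: "lower_mass_bound d \<mu> a s Cs"
    and annular: "annularly_connected_large d a"
    and q: "q > s"
    and E: "E \<in> sets \<mu>"
    and g_meas: "g \<in> borel_measurable (restrict_space \<mu> E)"
  shows "p_weak_upper_gradient d \<mu> p u g E \<longleftrightarrow>
         p_weak_upper_gradient (hat_d d a) (hat_mu d \<mu> a q) p
           (\<lambda>z. case z of Some x \<Rightarrow> u x | None \<Rightarrow> 0)
           (\<lambda>z. case z of Some x \<Rightarrow> g x * ennreal ((1 + d x a)\<^sup>2) | None \<Rightarrow> 0)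
           (Some ` E)"
proof -
  interpret mspace d a by unfold_locales (rule metric)
  interpret msm d a \<mu> q
    by unfold_locales (use meas in \<open>auto simp: good_borel_measure_def\<close>)
  have p0: "0 < p" using p by simp
  have ghat: "(\<lambda>z. case z of Some x \<Rightarrow> g x * ennreal ((1 + d x a)\<^sup>2) | None \<Rightarrow> 0)
      = (\<lambda>z. case z of Some x \<Rightarrow> g x * ennreal ((N x)\<^sup>2) | None \<Rightarrow> 0)"
    by (intro ext) (simp add: N_def split: option.splits)
  have wN: "w x = ennreal (N x powr (- q))" for x
    unfolding w_def N_def using N_pos[of x] unfolding N_def by (simp add: powr_minus_divide)
  have hatmeas: "(\<lambda>z. case z of Some x \<Rightarrow> g x * ennreal ((1 + d x a)\<^sup>2) | None \<Rightarrow> 0)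
           \<in> borel_measurable (restrict_space (hat_mu d \<mu> a q) (Some ` E))"
    by (rule ghat_meas[OF E g_meas])
  show ?thesis
  proof
    assume H: "p_weak_upper_gradient d \<mu> p u g E"
    then obtain \<Gamma> \<rho> where \<rho>m: "\<rho> \<in> borel_measurable (d_borel d)"
      and \<rho>i: "(\<integral>\<^sup>+ x. epowr (\<rho> x) p \<partial>\<mu>) < \<infinity>" and \<rho>\<Gamma>: "\<And>\<gamma>. \<gamma> \<in> \<Gamma> \<Longrightarrow> line_int d \<rho> \<gamma> = \<infinity>"
      and prp: "\<And>\<gamma>. d_rectifiable d \<gamma> \<Longrightarrow> nonconstant_curve \<gamma> \<Longrightarrow> \<gamma> ` {0..1} \<subseteq> E \<Longrightarrow> \<gamma> \<notin> \<Gamma> \<Longrightarrow>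
               ug_ineq (u (\<gamma> 0)) (u (\<gamma> 1)) (line_int d g \<gamma>)"
      unfolding p_weak_upper_gradient_def zero_p_modulus_def by blast
    define \<Gamma>h where "\<Gamma>h = {\<gamma>h. (\<forall>t\<in>{0..1}. \<gamma>h t \<noteq> None) \<and> d_rectifiable d (\<lambda>t. the (\<gamma>h t))
                              \<and> (\<lambda>t. the (\<gamma>h t)) \<in> \<Gamma>}"
    define \<rho>h where "\<rho>h = (\<lambda>z. case z of Some x \<Rightarrow> \<rho> x * ennreal (N x powr (q/p)) | None \<Rightarrow> 0)"
    have \<rho>hm: "\<rho>h \<in> borel_measurable (d_borel (hat_d d a))"
      unfolding \<rho>h_def by (rule hatfun_meas) (use \<rho>m in measurable)
    have "(\<integral>\<^sup>+ z. epowr (\<rho>h z) p \<partial>hat_mu d \<mu> a q) = (\<integral>\<^sup>+ x. w x * epowr (\<rho>h (Some x)) p \<partial>\<mu>)"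
      by (rule hat_mu_int) (use \<rho>hm in measurable)
    also have "\<dots> = (\<integral>\<^sup>+ x. epowr (\<rho> x) p \<partial>\<mu>)"
    proof (rule nn_integral_cong)
      fix x
      have Np: "0 < N x" by (rule N_pos)
      have "epowr (\<rho>h (Some x)) p = epowr (\<rho> x) p * ennreal ((N x powr (q/p)) powr p)"
        unfolding \<rho>h_def using Np p0 by (simp add: epowr_mult)
      also have "(N x powr (q/p)) powr p = N x powr q" using p0 by (simp add: powr_powr)
      finally have "w x * epowr (\<rho>h (Some x)) p = epowr (\<rho> x) p * (ennreal (N x powr (- q)) * ennreal (N x powr q))"
        unfolding wN by (simp add: mult.commute mult.left_commute)
      also have "ennreal (N x powr (- q)) * ennreal (N x powr q) = 1"
        using Np by (simp add: ennreal_mult[symmetric] powr_minus field_simps)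
      finally show "w x * epowr (\<rho>h (Some x)) p = epowr (\<rho> x) p" by simp
    qed
    finally have \<rho>hi: "(\<integral>\<^sup>+ z. epowr (\<rho>h z) p \<partial>hat_mu d \<mu> a q) < \<infinity>" using \<rho>i by simp
    have \<rho>h\<Gamma>: "line_int (hat_d d a) \<rho>h \<gamma>h = \<infinity>" if \<gamma>h: "\<gamma>h \<in> \<Gamma>h" for \<gamma>h
    proof -
      define \<gamma> where "\<gamma> t = the (\<gamma>h t)" for t
      have eq: "\<And>t::real. 0 \<le> t \<Longrightarrow> t \<le> 1 \<Longrightarrow> \<gamma>h t = Some (\<gamma> t)"
        using \<gamma>h unfolding \<Gamma>h_def \<gamma>_def by auto
      have rect: "d_rectifiable d \<gamma>" and G: "\<gamma> \<in> \<Gamma>" using \<gamma>h unfolding \<Gamma>h_def \<gamma>_def[abs_def] by auto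
      interpret cp d a \<gamma> \<gamma>h using metric eq rect by (simp add: cp_def cp_axioms_def mspace_def)
      have "line_int (hat_d d a) \<rho>h \<gamma>h = line_int d (\<lambda>x. \<rho> x * ennreal (N x powr (q/p)) * ennreal (1 / (N x)^2)) \<gamma>"
        unfolding line_int_hat_gen \<rho>h_def by simp
      also have "\<dots> = line_int d (\<lambda>x. \<rho> x * ennreal (N x powr (q/p - 2))) \<gamma>"
        by (simp add: mult.assoc powr_shift)
      also have "\<dots> = \<infinity>" by (rule line_int_weight_inf) (rule \<rho>\<Gamma>[OF G])
      finally show ?thesis .
    qed
    show "p_weak_upper_gradient (hat_d d a) (hat_mu d \<mu> a q) p
           (\<lambda>z. case z of Some x \<Rightarrow> u x | None \<Rightarrow> 0)
           (\<lambda>z. case z of Some x \<Rightarrow> g x * ennreal ((1 + d x a)\<^sup>2) | None \<Rightarrow> 0)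
           (Some ` E)"
      unfolding p_weak_upper_gradient_def
    proof (intro conjI exI[of _ \<Gamma>h])
      show "(\<lambda>z. case z of Some x \<Rightarrow> g x * ennreal ((1 + d x a)\<^sup>2) | None \<Rightarrow> 0)
           \<in> borel_measurable (restrict_space (hat_mu d \<mu> a q) (Some ` E))" by (rule hatmeas)
      show "zero_p_modulus (hat_d d a) (hat_mu d \<mu> a q) p \<Gamma>h"
        unfolding zero_p_modulus_def using \<rho>hm \<rho>hi \<rho>h\<Gamma> by blast
      show "\<forall>\<gamma>h. d_rectifiable (hat_d d a) \<gamma>h \<and> nonconstant_curve \<gamma>h \<and> \<gamma>h ` {0..1} \<subseteq> Some ` E \<and> \<gamma>h \<notin> \<Gamma>h \<longrightarrow>
          ug_ineq ((case \<gamma>h 0 of Some x \<Rightarrow> u x | None \<Rightarrow> 0)) ((case \<gamma>h 1 of Some x \<Rightarrow> u x | None \<Rightarrow> 0))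
            (line_int (hat_d d a) (\<lambda>z. case z of Some x \<Rightarrow> g x * ennreal ((1 + d x a)\<^sup>2) | None \<Rightarrow> 0) \<gamma>h)"
      proof (intro allI impI, elim conjE)
        fix \<gamma>h assume hr: "d_rectifiable (hat_d d a) \<gamma>h" and nc: "nonconstant_curve \<gamma>h"
          and im: "\<gamma>h ` {0..1} \<subseteq> Some ` E" and nG: "\<gamma>h \<notin> \<Gamma>h"
        define \<gamma> where "\<gamma> t = the (\<gamma>h t)" for t
        have eq: "\<gamma>h t = Some (\<gamma> t)" if t: "0 \<le> t" "t \<le> (1::real)" for t
        proof -
          have "\<gamma>h t \<in> Some ` E" using im t by auto
          then obtain x where "\<gamma>h t = Some x" by auto
          then show ?thesis by (simp add: \<gamma>_def)
        qed
        have rect: "d_rectifiable d \<gamma>" by (rule rect_hat_imp_d[of \<gamma>h \<gamma>, OF eq hr])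
        interpret cp d a \<gamma> \<gamma>h using metric eq rect by (simp add: cp_def cp_axioms_def mspace_def)
        have nc': "nonconstant_curve \<gamma>"
        proof -
          obtain s t where st: "s \<in> {0..1}" "t \<in> {0..1}" "\<gamma>h s \<noteq> \<gamma>h t"
            using nc unfolding nonconstant_curve_def by blast
          then have "\<gamma> s \<noteq> \<gamma> t" using eq[of s] eq[of t] by auto
          then show ?thesis using st unfolding nonconstant_curve_def by blast
        qed
        have im': "\<gamma> ` {0..1} \<subseteq> E"
        proof
          fix y assume "y \<in> \<gamma> ` {0..1}"
          then obtain t where t: "t \<in> {0..1}" "y = \<gamma> t" by auto
          then have "\<gamma>h t \<in> Some ` E" using im by blast
          then have "Some (\<gamma> t) \<in> Some ` E" using eq[of t] t(1) by simp
          then show "y \<in> E" using t by auto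
        qed
        have nG': "\<gamma> \<notin> \<Gamma>"
        proof
          assume "\<gamma> \<in> \<Gamma>"
          moreover have "\<forall>t\<in>{0..1}. \<gamma>h t \<noteq> None" using eq by auto
          moreover have "(\<lambda>t. the (\<gamma>h t)) = \<gamma>" unfolding \<gamma>_def by simp
          ultimately have "\<gamma>h \<in> \<Gamma>h" unfolding \<Gamma>h_def using rect by simp
          then show False using nG by simp
        qed
        have ug: "ug_ineq (u (\<gamma> 0)) (u (\<gamma> 1)) (line_int d g \<gamma>)" by (rule prp[OF rect nc' im' nG'])
        show "ug_ineq ((case \<gamma>h 0 of Some x \<Rightarrow> u x | None \<Rightarrow> 0)) ((case \<gamma>h 1 of Some x \<Rightarrow> u x | None \<Rightarrow> 0))
            (line_int (hat_d d a) (\<lambda>z. case z of Some x \<Rightarrow> g x * ennreal ((1 + d x a)\<^sup>2) | None \<Rightarrow> 0) \<gamma>h)"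
          unfolding ghat line_int_ghat using ug eq[of 0] eq[of 1] by simp
      qed
    qed
  next
    assume Hh: "p_weak_upper_gradient (hat_d d a) (hat_mu d \<mu> a q) p
           (\<lambda>z. case z of Some x \<Rightarrow> u x | None \<Rightarrow> 0)
           (\<lambda>z. case z of Some x \<Rightarrow> g x * ennreal ((1 + d x a)\<^sup>2) | None \<Rightarrow> 0)
           (Some ` E)"
    then obtain \<Gamma>h \<rho>h where \<rho>hm: "\<rho>h \<in> borel_measurable (d_borel (hat_d d a))"
      and \<rho>hi: "(\<integral>\<^sup>+ z. epowr (\<rho>h z) p \<partial>hat_mu d \<mu> a q) < \<infinity>"
      and \<rho>h\<Gamma>: "\<And>\<gamma>h. \<gamma>h \<in> \<Gamma>h \<Longrightarrow> line_int (hat_d d a) \<rho>h \<gamma>h = \<infinity>"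
      and prp: "\<And>\<gamma>h. d_rectifiable (hat_d d a) \<gamma>h \<Longrightarrow> nonconstant_curve \<gamma>h \<Longrightarrow> \<gamma>h ` {0..1} \<subseteq> Some ` E \<Longrightarrow> \<gamma>h \<notin> \<Gamma>h \<Longrightarrow>
               ug_ineq ((case \<gamma>h 0 of Some x \<Rightarrow> u x | None \<Rightarrow> 0)) ((case \<gamma>h 1 of Some x \<Rightarrow> u x | None \<Rightarrow> 0))
                 (line_int (hat_d d a) (\<lambda>z. case z of Some x \<Rightarrow> g x * ennreal ((1 + d x a)\<^sup>2) | None \<Rightarrow> 0) \<gamma>h)"
      unfolding p_weak_upper_gradient_def zero_p_modulus_def by blast
    define \<Gamma> where "\<Gamma> = {\<gamma>. (\<lambda>t. Some (\<gamma> t)) \<in> \<Gamma>h \<and> d_rectifiable d \<gamma>}"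
    define \<rho> where "\<rho> = (\<lambda>x. \<rho>h (Some x) * ennreal (N x powr (- (q/p))))"
    have \<rho>m: "\<rho> \<in> borel_measurable (d_borel d)"
      unfolding \<rho>_def using backfun_meas[OF \<rho>hm] by measurable
    have "(\<integral>\<^sup>+ x. epowr (\<rho> x) p \<partial>\<mu>) = (\<integral>\<^sup>+ x. w x * epowr (\<rho>h (Some x)) p \<partial>\<mu>)"
    proof (rule nn_integral_cong)
      fix x
      have Np: "0 < N x" by (rule N_pos)
      have "epowr (\<rho> x) p = epowr (\<rho>h (Some x)) p * ennreal ((N x powr (- (q/p))) powr p)"
        unfolding \<rho>_def using Np p0 by (simp add: epowr_mult)
      also have "(N x powr (- (q/p))) powr p = N x powr (- q)" using p0 by (simp add: powr_powr)
      finally show "epowr (\<rho> x) p = w x * epowr (\<rho>h (Some x)) p" unfolding wN by (simp add: mult.commute)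
    qed
    also have "\<dots> = (\<integral>\<^sup>+ z. epowr (\<rho>h z) p \<partial>hat_mu d \<mu> a q)"
      by (rule hat_mu_int[symmetric]) (use \<rho>hm in measurable)
    finally have \<rho>i: "(\<integral>\<^sup>+ x. epowr (\<rho> x) p \<partial>\<mu>) < \<infinity>" using \<rho>hi by simp
    have \<rho>\<Gamma>: "line_int d \<rho> \<gamma> = \<infinity>" if G: "\<gamma> \<in> \<Gamma>" for \<gamma>
    proof -
      have rect: "d_rectifiable d \<gamma>" and Gh: "(\<lambda>t. Some (\<gamma> t)) \<in> \<Gamma>h" using G unfolding \<Gamma>_def by auto
      interpret cp d a \<gamma> "\<lambda>t. Some (\<gamma> t)" using metric rect by (simp add: cp_def cp_axioms_def mspace_def)
      have "\<infinity> = line_int (hat_d d a) \<rho>h (\<lambda>t. Some (\<gamma> t))" using \<rho>h\<Gamma>[OF Gh] by simp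
      also have "\<dots> = line_int d (\<lambda>x. \<rho>h (Some x) * ennreal (1 / (N x)^2)) \<gamma>" by (rule line_int_hat_gen)
      finally have inf: "line_int d (\<lambda>x. \<rho>h (Some x) * ennreal (1 / (N x)^2)) \<gamma> = \<infinity>" by simp
      have "line_int d (\<lambda>x. \<rho>h (Some x) * ennreal (1 / (N x)^2) * ennreal (N x powr (2 - q/p))) \<gamma> = \<infinity>"
        by (rule line_int_weight_inf[OF inf])
      moreover have "(\<lambda>x. \<rho>h (Some x) * ennreal (1 / (N x)^2) * ennreal (N x powr (2 - q/p))) = \<rho>"
      proof
        fix x
        have "ennreal (N x powr (2 - q/p)) * ennreal (1 / (N x)^2) = ennreal (N x powr (- (q/p)))"
          using powr_shift[of x "2 - q/p"] by simp
        then show "\<rho>h (Some x) * ennreal (1 / (N x)^2) * ennreal (N x powr (2 - q/p)) = \<rho> x"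
          unfolding \<rho>_def by (simp add: mult.assoc mult.commute[of "ennreal (1 / (N x)^2)"])
      qed
      ultimately show ?thesis by simp
    qed
    show "p_weak_upper_gradient d \<mu> p u g E"
      unfolding p_weak_upper_gradient_def
    proof (intro conjI exI[of _ \<Gamma>])
      show "g \<in> borel_measurable (restrict_space \<mu> E)" by (rule g_meas)
      show "zero_p_modulus d \<mu> p \<Gamma>"
        unfolding zero_p_modulus_def using \<rho>m \<rho>i \<rho>\<Gamma> by blast
      show "\<forall>\<gamma>. d_rectifiable d \<gamma> \<and> nonconstant_curve \<gamma> \<and> \<gamma> ` {0..1} \<subseteq> E \<and> \<gamma> \<notin> \<Gamma> \<longrightarrow>
               ug_ineq (u (\<gamma> 0)) (u (\<gamma> 1)) (line_int d g \<gamma>)"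
      proof (intro allI impI, elim conjE)
        fix \<gamma> assume rect: "d_rectifiable d \<gamma>" and nc: "nonconstant_curve \<gamma>"
          and im: "\<gamma> ` {0..1} \<subseteq> E" and nG: "\<gamma> \<notin> \<Gamma>"
        interpret cp d a \<gamma> "\<lambda>t. Some (\<gamma> t)" using metric rect by (simp add: cp_def cp_axioms_def mspace_def)
        have hr: "d_rectifiable (hat_d d a) (\<lambda>t. Some (\<gamma> t))" by (rule hrect)
        have nc': "nonconstant_curve (\<lambda>t. Some (\<gamma> t))" using nc unfolding nonconstant_curve_def by auto
        have im': "(\<lambda>t. Some (\<gamma> t)) ` {0..1} \<subseteq> Some ` E" using im by auto
        have nG': "(\<lambda>t. Some (\<gamma> t)) \<notin> \<Gamma>h" using nG rect unfolding \<Gamma>_def by auto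
        have "ug_ineq (u (\<gamma> 0)) (u (\<gamma> 1))
                 (line_int (hat_d d a) (\<lambda>z. case z of Some x \<Rightarrow> g x * ennreal ((1 + d x a)\<^sup>2) | None \<Rightarrow> 0) (\<lambda>t. Some (\<gamma> t)))"
          using prp[OF hr nc' im' nG'] by simp
        then show "ug_ineq (u (\<gamma> 0)) (u (\<gamma> 1)) (line_int d g \<gamma>)"
          unfolding ghat line_int_ghat .
      qed
    qed
  qed
qed


end
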